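(* Let $X$ be a finite set with $|X|\geq 2$, put $p=2|X|-1$, and let $y$ be the exponential growth rate of the free inverse monoid $\mathrm{FIM}(X)$. Then $y$ is the largest real root of the polynomial equation \[p^p y^{p-2}-(py-1)^{p-1}=0,\] and $y\in(p,p+1)$. In particular, $y$ is an algebraic number.
   Context: $\mathrm{FIM}(X)$ is the free inverse monoid on $X$, generated as a monoid by $X\cup X^{-1}$, where $X^{-1}$ is a disjoint copy of $X$. The length of an element is the minimal length of a word over $X\cup X^{-1}$ representing it. $S(K)$ is the set of elements of length exactly $K$. The exponential growth rate is $\limsup_{K\to\infty}|S(K)|^{1/K}$. *)

theory Defs
  imports Complex_Main "HOL-Library.Extended_Real" "HOL-Library.Liminf_Limsup" "HOL-Computational_Algebra.Polynomial"
begin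

text \<open>Letters of the alphabet X \<union> X^{-1}: (x, True) stands for x, (x, False) for its
  formal inverse x^{-1}. Words are lists of letters.\<close>

type_synonym 'a fim_word = "('a \<times> bool) list"

definition fim_words :: "'a set \<Rightarrow> 'a fim_word set" where
  "fim_words X = lists (X \<times> UNIV)"

definition winv :: "'a fim_word \<Rightarrow> 'a fim_word" where
  "winv w = rev (map (\<lambda>(x, b). (x, \<not> b)) w)"

inductive wag :: "'a fim_word \<Rightarrow> 'a fim_word \<Rightarrow> bool" where
  wag_refl: "wag w w"
| wag_sym: "wag w v \<Longrightarrow> wag v w"
| wag_trans: "wag u v \<Longrightarrow> wag v w \<Longrightarrow> wag u w"
| wag_ctx: "wag w v \<Longrightarrow> wag (l @ w @ r) (l @ v @ r)"
| wag_ax1: "wag (w @ winv w @ w) w"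
| wag_ax2: "wag (w @ winv w @ v @ winv v) (v @ winv v @ w @ winv w)"

definition fim_elem :: "'a set \<Rightarrow> 'a fim_word \<Rightarrow> 'a fim_word set" where
  "fim_elem X w = {v \<in> fim_words X. wag w v}"

definition FIM :: "'a set \<Rightarrow> 'a fim_word set set" where
  "FIM X = fim_elem X ` fim_words X"

definition fim_length :: "'a fim_word set \<Rightarrow> nat" where
  "fim_length e = (LEAST n. \<exists>v\<in>e. length v = n)"

definition fim_sphere :: "'a set \<Rightarrow> nat \<Rightarrow> 'a fim_word set set" where
  "fim_sphere X K = {e \<in> FIM X. fim_length e = K}"

definition fim_growth_rate :: "'a set \<Rightarrow> ereal" where
  "fim_growth_rate X = limsup (\<lambda>K. ereal (real (card (fim_sphere X K)) powr (1 / real K)))"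

end

theory Submission
  imports Defs "HOL-Library.FuncSet" "HOL-Analysis.Summation_Tests"
begin


definition linv :: "'a \<times> bool \<Rightarrow> 'a \<times> bool" where
  "linv = (\<lambda>(x,b). (x, \<not> b))"

lemma linv_linv[simp]: "linv (linv a) = a"
  by (cases a) (simp add: linv_def)

lemma linv_neq[simp]: "linv a \<noteq> a" "a \<noteq> linv a"
  by (cases a, simp add: linv_def)+

lemma linv_eq_iff: "linv a = b \<longleftrightarrow> a = linv b"
  by auto

lemma winv_def2: "winv w = rev (map linv w)"
  unfolding winv_def linv_def by simp

lemma winv_append[simp]: "winv (u @ v) = winv v @ winv u"
  by (simp add: winv_def2)

lemma winv_Cons: "winv (a # v) = winv v @ [linv a]"
  by (simp add: winv_def2)

lemma winv_winv[simp]: "winv (winv w) = w"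
  by (simp add: winv_def2 rev_map comp_def)

lemma length_winv[simp]: "length (winv w) = length w"
  by (simp add: winv_def2)

fun rd :: "('a \<times> bool) list \<Rightarrow> bool" where
  "rd (a # b # l) = (b \<noteq> linv a \<and> rd (b # l))"
| "rd _ = True"

definition stp :: "('a \<times> bool) list \<Rightarrow> 'a \<times> bool \<Rightarrow> ('a \<times> bool) list" where
  "stp r a = (case r of [] \<Rightarrow> [a] | b # r' \<Rightarrow> if b = linv a then r' else a # r)"

lemma rd_tl: "rd r \<Longrightarrow> rd (tl r)"
  by (cases r rule: rd.cases) auto

lemma rd_stp: "rd r \<Longrightarrow> rd (stp r a)"
  by (cases r) (auto simp: stp_def rd_tl dest: rd_tl)

lemma stp_cancel: "rd r \<Longrightarrow> stp (stp r a) (linv a) = r"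
  by (cases r rule: rd.cases) (auto simp: stp_def)

definition endp :: "('a \<times> bool) list \<Rightarrow> ('a \<times> bool) list \<Rightarrow> ('a \<times> bool) list" where
  "endp r w = foldl stp r w"

fun walk :: "('a \<times> bool) list \<Rightarrow> ('a \<times> bool) list \<Rightarrow> ('a \<times> bool) list set" where
  "walk r [] = {r}"
| "walk r (a # w) = insert r (walk (stp r a) w)"

lemma endp_simps[simp]: "endp r [] = r" "endp r (a # w) = endp (stp r a) w"
  "endp r (u @ v) = endp (endp r u) v"
  by (simp_all add: endp_def)

lemma rd_endp: "rd r \<Longrightarrow> rd (endp r w)"
  by (induction w arbitrary: r) (auto simp: rd_stp)

lemma r_in_walk: "r \<in> walk r w"
  by (cases w) auto

lemma endp_in_walk: "endp r w \<in> walk r w"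
  by (induction w arbitrary: r) auto

lemma walk_append: "walk r (u @ v) = walk r u \<union> walk (endp r u) v"
  by (induction u arbitrary: r) (auto simp: r_in_walk)

lemma walk_snoc: "walk r (u @ [a]) = insert (endp r (u @ [a])) (walk r u)"
  by (auto simp add: walk_append endp_in_walk)

lemma rd_walk: "rd r \<Longrightarrow> v \<in> walk r w \<Longrightarrow> rd v"
proof (induction w arbitrary: r)
  case (Cons a w)
  show ?case
  proof (cases "v = r")
    case False
    then have "v \<in> walk (stp r a) w" using Cons.prems by simp
    then show ?thesis using Cons.IH[OF rd_stp[OF Cons.prems(1)]] by blast
  qed (use Cons.prems in simp)
qed simp

lemma winv_end_walk: "rd r \<Longrightarrow> endp (endp r w) (winv w) = r \<and> walk (endp r w) (winv w) = walk r w"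
proof (induction w arbitrary: r rule: rev_induct)
  case Nil then show ?case by (simp add: winv_def2)
next
  case (snoc a w)
  have e: "stp (endp r (w @ [a])) (linv a) = endp r w"
    using snoc.prems by (simp add: stp_cancel rd_endp)
  show ?case using snoc.IH[OF snoc.prems] e
    by (simp add: winv_def2 walk_snoc)
qed

lemma wag_inv: "wag w v \<Longrightarrow> rd r \<Longrightarrow> walk r w = walk r v \<and> endp r w = endp r v"
proof (induction arbitrary: r rule: wag.induct)
  case (wag_ctx w v l rr)
  then have "rd (endp r l)" by (simp add: rd_endp)
  with wag_ctx show ?case by (simp add: walk_append)
next
  case (wag_ax1 w)
  have "rd (endp r w)" by (simp add: rd_endp wag_ax1)
  with winv_end_walk[OF wag_ax1(1), of w] show ?case
    by (auto simp: walk_append)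
next
  case (wag_ax2 w v)
  note a = winv_end_walk[OF wag_ax2(1), of w] winv_end_walk[OF wag_ax2(1), of v]
  show ?case using a by (auto simp: walk_append)
qed auto

lemma wag_cong: "wag a b \<Longrightarrow> wag c d \<Longrightarrow> wag (a @ c) (b @ d)"
proof -
  assume ab: "wag a b" and cd: "wag c d"
  have "wag ([] @ a @ c) ([] @ b @ c)" by (rule wag_ctx[OF ab])
  moreover have "wag (b @ c @ []) (b @ d @ [])" by (rule wag_ctx[OF cd])
  ultimately show ?thesis by simp (rule wag_trans)
qed

lemma wag_congL: "wag c d \<Longrightarrow> wag (a @ c) (a @ d)"
  by (rule wag_cong[OF wag_refl])

lemma wag_congR: "wag a b \<Longrightarrow> wag (a @ c) (b @ c)"
  by (rule wag_cong[OF _ wag_refl])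

definition EE :: "('a \<times> bool) list \<Rightarrow> ('a \<times> bool) list" where
  "EE u = u @ winv u"

definition PP :: "('a \<times> bool) list list \<Rightarrow> ('a \<times> bool) list" where
  "PP xs = concat (map (\<lambda>v. EE (rev v)) xs)"

lemma PP_simps[simp]: "PP [] = []" "PP (x # xs) = EE (rev x) @ PP xs" "PP (xs @ ys) = PP xs @ PP ys"
  by (simp_all add: PP_def)

lemma EE_idem: "wag (EE u @ EE u @ c) (EE u @ c)"
proof -
  have "wag ((u @ winv u @ u) @ winv u @ c) (u @ winv u @ c)"
    by (rule wag_congR) (rule wag_ax1)
  thus ?thesis by (simp add: EE_def)
qed

lemma EE_comm: "wag (EE u @ EE v @ c) (EE v @ EE u @ c)"
proof -
  have "wag ((u @ winv u @ v @ winv v) @ c) ((v @ winv v @ u @ winv u) @ c)"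
    by (rule wag_congR) (rule wag_ax2)
  thus ?thesis by (simp add: EE_def)
qed

lemma PP_removeAll: "x \<in> set xs \<Longrightarrow> wag (PP xs) (EE (rev x) @ PP (removeAll x xs))"
proof (induction xs)
  case Nil then show ?case by simp
next
  case (Cons y ys)
  show ?case
  proof (cases "y = x")
    case True
    show ?thesis
    proof (cases "x \<in> set ys")
      case True
      have "wag (EE (rev x) @ PP ys) (EE (rev x) @ EE (rev x) @ PP (removeAll x ys))"
        by (rule wag_congL) (rule Cons.IH[OF True])
      moreover have "wag (EE (rev x) @ EE (rev x) @ PP (removeAll x ys)) (EE (rev x) @ PP (removeAll x ys))"
        by (rule EE_idem)
      ultimately have "wag (EE (rev x) @ PP ys) (EE (rev x) @ PP (removeAll x ys))" by (rule wag_trans)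
      thus ?thesis using \<open>y = x\<close> by simp
    next
      case False
      then show ?thesis using \<open>y = x\<close> by (simp add: wag_refl)
    qed
  next
    case False
    with Cons.prems have xs: "x \<in> set ys" by auto
    have "wag (EE (rev y) @ PP ys) (EE (rev y) @ EE (rev x) @ PP (removeAll x ys))"
      by (rule wag_congL) (rule Cons.IH[OF xs])
    moreover have "wag (EE (rev y) @ EE (rev x) @ PP (removeAll x ys)) (EE (rev x) @ EE (rev y) @ PP (removeAll x ys))"
      by (rule EE_comm)
    ultimately have "wag (EE (rev y) @ PP ys) (EE (rev x) @ EE (rev y) @ PP (removeAll x ys))" by (rule wag_trans)
    thus ?thesis using False by simp
  qed
qed

lemma PP_distinct: "distinct zs \<Longrightarrow> set xs = set zs \<Longrightarrow> wag (PP xs) (PP zs)"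
proof (induction zs arbitrary: xs)
  case Nil then show ?case by (simp add: wag_refl)
next
  case (Cons z zs)
  have zx: "z \<in> set xs" using Cons.prems by auto
  have "set (removeAll z xs) = set zs" using Cons.prems by auto
  hence "wag (PP (removeAll z xs)) (PP zs)" using Cons by auto
  hence h: "wag (EE (rev z) @ PP (removeAll z xs)) (PP (z # zs))" by (simp add: wag_congL)
  show ?case by (rule wag_trans[OF PP_removeAll[OF zx] h])
qed

lemma PP_set: "set xs = set ys \<Longrightarrow> wag (PP xs) (PP ys)"
proof -
  assume a: "set xs = set ys"
  have b: "wag (PP xs) (PP (remdups xs))" by (rule PP_distinct) auto
  have c: "wag (PP ys) (PP (remdups xs))" using a by (intro PP_distinct) auto
  show ?thesis by (rule wag_trans[OF b wag_sym[OF c]])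
qed

lemma EE_PP_comm: "wag (EE u @ PP xs @ c) (PP xs @ EE u @ c)"
proof (induction xs arbitrary: c)
  case Nil then show ?case by (simp add: wag_refl)
next
  case (Cons x xs)
  have "wag (EE u @ EE (rev x) @ (PP xs @ c)) (EE (rev x) @ EE u @ (PP xs @ c))" by (rule EE_comm)
  moreover have "wag (EE (rev x) @ (EE u @ PP xs @ c)) (EE (rev x) @ (PP xs @ EE u @ c))"
    by (rule wag_congL) (rule Cons.IH)
  ultimately have "wag (EE u @ EE (rev x) @ PP xs @ c) (EE (rev x) @ PP xs @ EE u @ c)" by (rule wag_trans)
  thus ?case by simp
qed

lemma PP_absorb: "x \<in> set xs \<Longrightarrow> wag (PP xs @ EE (rev x) @ c) (PP xs @ c)"
proof -
  assume x: "x \<in> set xs"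
  let ?E = "EE (rev x)" and ?Q = "PP (removeAll x xs)"
  have 1: "wag (PP xs @ ?E @ c) (?E @ PP xs @ c)" by (rule wag_sym, rule EE_PP_comm)
  have 2: "wag (?E @ PP xs @ c) (?E @ ?E @ ?Q @ c)"
    using wag_congL[OF wag_congR[OF PP_removeAll[OF x], of c], of ?E] by simp
  have 3: "wag (?E @ ?E @ ?Q @ c) (?E @ ?Q @ c)" by (rule EE_idem)
  have 4: "wag (?E @ ?Q @ c) (PP xs @ c)"
    using wag_congR[OF wag_sym[OF PP_removeAll[OF x]], of c] by simp
  show ?thesis by (rule wag_trans[OF wag_trans[OF 1 2] wag_trans[OF 3 4]])
qed

lemma walk_tl_closed: "v \<in> walk [] w \<Longrightarrow> tl v \<in> walk [] w"
proof (induction w arbitrary: v rule: rev_induct)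
  case Nil then show ?case by simp
next
  case (snoc a w)
  let ?g = "endp [] w"
  have g: "?g \<in> walk [] w" by (rule endp_in_walk)
  show ?case
  proof (cases "v \<in> walk [] w")
    case True then show ?thesis using snoc.IH by (simp add: walk_snoc)
  next
    case False
    then have v: "v = stp ?g a" using snoc.prems by (simp add: walk_snoc)
    show ?thesis
    proof (cases ?g)
      case Nil then show ?thesis using v by (simp add: stp_def walk_snoc r_in_walk)
    next
      case (Cons b g')
      have "g' \<in> walk [] w" using snoc.IH[OF g] Cons by simp
      then show ?thesis using v Cons snoc.IH[of g'] g by (auto simp: stp_def walk_snoc split: if_splits)
    qed
  qed
qed

lemma pop_lemma: "wag (u @ [b, linv b]) (EE (u @ [b]) @ u)"
proof -
  have e1: "EE (u @ [b]) @ u = u @ (EE [b] @ EE (winv u))"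
    by (simp add: EE_def winv_def2 rev_map o_def)
  have w2: "wag (u @ (EE [b] @ EE (winv u))) (u @ (EE (winv u) @ EE [b]))"
    by (rule wag_congL) (unfold EE_def, simp, rule wag_ax2[of "[b]" "winv u", simplified])
  have e3: "u @ (EE (winv u) @ EE [b]) = (u @ winv (u) @ u) @ EE [b]"
    by (simp add: EE_def)
  have w4: "wag ((u @ winv (u) @ u) @ EE [b]) (u @ EE [b])"
    by (rule wag_congR) (rule wag_ax1)
  have e5: "u @ EE [b] = u @ [b, linv b]" by (simp add: EE_def winv_def2)
  have a: "wag (u @ [b, linv b]) (u @ (EE (winv u) @ EE [b]))"
    using wag_sym[OF w4] unfolding e5 e3[symmetric] .
  have b: "wag (u @ (EE (winv u) @ EE [b])) (EE (u @ [b]) @ u)"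
    using wag_sym[OF w2] unfolding e1[symmetric] .
  show ?thesis by (rule wag_trans[OF a b])
qed

lemma canon: "\<exists>xs. set xs = walk [] w \<and> wag w (PP xs @ rev (endp [] w))"
proof (induction w rule: rev_induct)
  case Nil
  show ?case by (rule exI[of _ "[[]]"]) (simp add: EE_def winv_def2 wag_refl)
next
  case (snoc a w)
  then obtain xs where xs: "set xs = walk [] w" and wq: "wag w (PP xs @ rev (endp [] w))" by blast
  let ?g = "endp [] w"
  have w1: "wag (w @ [a]) (PP xs @ rev ?g @ [a])"
    using wag_congR[OF wq, of "[a]"] by simp
  show ?case
  proof (cases "?g \<noteq> [] \<and> hd ?g = linv a")
    case False
    then have st: "stp ?g a = a # ?g" by (cases ?g) (auto simp: stp_def)
    let ?h = "rev ?g @ [a]"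
    have "wag ?h (?h @ winv ?h @ ?h)" by (rule wag_sym, rule wag_ax1)
    hence "wag (PP xs @ ?h) (PP xs @ EE ?h @ ?h)" by (simp add: wag_congL EE_def)
    hence "wag (w @ [a]) (PP xs @ EE ?h @ ?h)" using wag_trans[OF w1] by simp
    hence "wag (w @ [a]) (PP (xs @ [a # ?g]) @ rev (endp [] (w @ [a])))"
      using st by simp
    moreover have "set (xs @ [a # ?g]) = walk [] (w @ [a])"
      using xs st by (simp add: walk_snoc)
    ultimately show ?thesis by blast
  next
    case True
    then obtain g' where gg: "?g = linv a # g'" by (cases ?g) auto
    have st: "stp ?g a = g'" using gg by (simp add: stp_def)
    have gin: "?g \<in> set xs" using xs endp_in_walk by blast
    have g'in: "g' \<in> walk [] w" using walk_tl_closed[OF endp_in_walk[of "[]" w]] gg by simp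
    have "wag (rev g' @ [linv a, a]) (EE (rev g' @ [linv a]) @ rev g')"
      using pop_lemma[of "rev g'" "linv a"] by simp
    hence "wag (PP xs @ rev ?g @ [a]) (PP xs @ EE (rev ?g) @ rev g')"
      using gg by (simp add: wag_congL)
    moreover have "wag (PP xs @ EE (rev ?g) @ rev g') (PP xs @ rev g')"
      by (rule PP_absorb[OF gin])
    ultimately have "wag (w @ [a]) (PP xs @ rev g')"
      using wag_trans[OF w1] wag_trans by blast
    hence "wag (w @ [a]) (PP xs @ rev (endp [] (w @ [a])))"
      using st by simp
    moreover have "set xs = walk [] (w @ [a])"
      using xs st g'in by (auto simp: walk_snoc)
    ultimately show ?thesis by blast
  qed
qed

theorem munn_complete: "walk [] w = walk [] v \<Longrightarrow> endp [] w = endp [] v \<Longrightarrow> wag w v"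
proof -
  assume a: "walk [] w = walk [] v" "endp [] w = endp [] v"
  obtain xs where xs: "set xs = walk [] w" "wag w (PP xs @ rev (endp [] w))" using canon by blast
  obtain ys where ys: "set ys = walk [] v" "wag v (PP ys @ rev (endp [] v))" using canon by blast
  have "wag (PP xs @ rev (endp [] w)) (PP ys @ rev (endp [] v))"
    using a xs ys by (simp add: wag_congR PP_set)
  thus ?thesis by (rule wag_trans[OF xs(2) wag_trans[OF _ wag_sym[OF ys(2)]]])
qed


lemma finite_walk[simp]: "finite (walk r w)"
  by (induction w arbitrary: r) auto

lemma walk_endp_take: "v \<in> walk r w \<Longrightarrow> \<exists>i\<le>length w. endp r (take i w) = v"
proof (induction w arbitrary: r)
  case Nil then show ?case by simp
next
  case (Cons a w)
  show ?case
  proof (cases "v = r")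
    case True then show ?thesis by (intro exI[of _ 0]) simp
  next
    case False
    then obtain i where "i \<le> length w" "endp (stp r a) (take i w) = v" using Cons by auto
    then show ?thesis by (intro exI[of _ "Suc i"]) simp
  qed
qed

definition sufs :: "'b list \<Rightarrow> 'b list set" where
  "sufs g = (\<lambda>i. drop i g) ` {..length g}"

lemma card_sufs: "card (sufs g) = Suc (length g)"
proof -
  have "inj_on (\<lambda>i. drop i g) {..length g}"
  proof (rule inj_onI)
    fix i j assume "i \<in> {..length g}" "j \<in> {..length g}" "drop i g = drop j g"
    then have "length g - i = length g - j" "i \<le> length g" "j \<le> length g"
      by (metis length_drop, simp, simp)
    then show "i = j" by simp
  qed
  thus ?thesis by (simp add: sufs_def card_image)
qed

lemma sufs_Cons: "sufs (c # g) = insert (c # g) (sufs g)"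
  by (simp add: sufs_def atMost_Suc_eq_insert_0 image_image)

lemma sufs_Nil[simp]: "sufs [] = {[]}"
  by (simp add: sufs_def)

lemma self_in_sufs[simp]: "g \<in> sufs g"
  by (auto simp: sufs_def intro: image_eqI[of _ _ 0])

lemma Nil_in_sufs[simp]: "[] \<in> sufs g"
  by (auto simp: sufs_def intro: image_eqI[of _ _ "length g"])

lemma sufs_tl: "v \<in> sufs g \<Longrightarrow> tl v \<in> sufs g"
proof -
  assume "v \<in> sufs g"
  then obtain i where i: "i \<le> length g" "v = drop i g" by (auto simp: sufs_def)
  have tv: "tl v = drop (Suc i) g" using i by (simp add: drop_Suc tl_drop)
  show ?thesis
  proof (cases "Suc i \<le> length g")
    case True then show ?thesis using tv by (auto simp: sufs_def)
  next
    case False then have "tl v = drop (length g) g" using tv by simp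
    then show ?thesis by (auto simp: sufs_def)
  qed
qed

definition tclosed :: "'b list set \<Rightarrow> bool" where
  "tclosed V \<longleftrightarrow> (\<forall>v\<in>V. tl v \<in> V)"

lemma sufs_sub: "tclosed V \<Longrightarrow> g \<in> V \<Longrightarrow> sufs g \<subseteq> V"
proof -
  assume t: "tclosed V" and g: "g \<in> V"
  have "drop i g \<in> V" for i
  proof (induction i)
    case (Suc i)
    have "tl (drop i g) \<in> V" using Suc t by (auto simp: tclosed_def)
    then show ?case by (simp add: drop_Suc tl_drop)
  qed (use g in simp)
  thus ?thesis by (auto simp: sufs_def)
qed

definition valid :: "('a \<times> bool) set \<Rightarrow> ('a \<times> bool) list set \<Rightarrow> ('a \<times> bool) list \<Rightarrow> bool" where
  "valid D V g \<longleftrightarrow> finite V \<and> [] \<in> V \<and> tclosed V \<and> (\<forall>v\<in>V. rd v \<and> set v \<subseteq> D) \<and> g \<in> V"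

lemma length_le_card: "valid D V g \<Longrightarrow> length g < card V"
  using card_mono[OF _ sufs_sub[of V g]] card_sufs[of g] by (auto simp: valid_def)

lemma set_stp: "set (stp r a) \<subseteq> insert a (set r)"
  by (cases r) (auto simp: stp_def)

lemma walk_letters: "v \<in> walk r w \<Longrightarrow> set v \<subseteq> set r \<union> set w"
proof (induction w arbitrary: r)
  case (Cons a w)
  show ?case
  proof (cases "v = r")
    case False
    then have "v \<in> walk (stp r a) w" using Cons.prems by simp
    then show ?thesis using Cons.IH[of "stp r a"] set_stp[of r a] by auto
  qed auto
qed simp

lemma valid_walk: "set w \<subseteq> D \<Longrightarrow> valid D (walk [] w) (endp [] w)"
proof -
  assume w: "set w \<subseteq> D"
  have "set v \<subseteq> D" if "v \<in> walk [] w" for v using walk_letters[OF that] w by auto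
  then show ?thesis unfolding valid_def tclosed_def
    using walk_tl_closed rd_walk[of "[]"] by (auto simp: r_in_walk endp_in_walk)
qed

lemma phi_le: "2 * int (card (walk [] w)) - 2 - int (length (endp [] w)) \<le> int (length w)"
proof (induction w rule: rev_induct)
  case Nil then show ?case by simp
next
  case (snoc a w)
  let ?g = "endp [] w"
  show ?case
  proof (cases "?g \<noteq> [] \<and> hd ?g = linv a")
    case False
    then have st: "stp ?g a = a # ?g" by (cases ?g) (auto simp: stp_def)
    have "card (walk [] (w @ [a])) \<le> Suc (card (walk [] w))"
      by (simp add: walk_snoc card_insert_le_m1 card_insert_if)
    then show ?thesis using snoc st by simp
  next
    case True
    then obtain g' where gg: "?g = linv a # g'" by (cases ?g) auto
    have st: "stp ?g a = g'" using gg by (simp add: stp_def)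
    have g'in: "g' \<in> walk [] w" using walk_tl_closed[OF endp_in_walk[of "[]" w]] gg by simp
    have "walk [] (w @ [a]) = walk [] w" using st g'in by (auto simp: walk_snoc)
    then show ?thesis using snoc st gg by simp
  qed
qed


lemma realize_aux:
  assumes invD: "\<forall>a\<in>D. linv a \<in> D"
  shows "card V = n \<Longrightarrow> valid D V g \<Longrightarrow>
   \<exists>w. set w \<subseteq> D \<and> walk [] w = V \<and> endp [] w = g \<and> length w = 2 * (card V - 1) - length g"
proof (induction n arbitrary: V g rule: less_induct)
  case (less n)
  have fin: "finite V" and nil: "[] \<in> V" and tc: "tclosed V" and rdD: "\<forall>v\<in>V. rd v \<and> set v \<subseteq> D"
    and gV: "g \<in> V" using less.prems by (auto simp: valid_def)
  have sV: "sufs g \<subseteq> V" by (rule sufs_sub[OF tc gV])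
  show ?case
  proof (cases "V = sufs g")
    case True
    show ?thesis
    proof (cases g)
      case Nil
      then show ?thesis using True by (intro exI[of _ "[]"]) simp
    next
      case (Cons c g')
      let ?V' = "sufs g'"
      have cV: "card V = Suc (Suc (length g'))" using True Cons card_sufs[of "c # g'"] by simp
      have sub: "?V' \<subseteq> V" using True Cons sufs_Cons[of c g'] by auto
      have fin': "finite ?V'" by (simp add: sufs_def)
      have val: "valid D ?V' g'"
        unfolding valid_def tclosed_def using sub rdD sufs_tl[of _ g'] fin' by auto
      have "card ?V' < n" using cV less.prems card_sufs[of g'] by simp
      from less.IH[OF this refl val] obtain w' where w': "set w' \<subseteq> D" "walk [] w' = ?V'"
        "endp [] w' = g'" "length w' = 2 * (card ?V' - 1) - length g'" by blast
      have rg: "rd g" using rdD gV by auto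
      have st: "stp g' c = c # g'" using rg Cons by (cases g' rule: rd.cases) (auto simp: stp_def)
      have cD: "c \<in> D" using rdD gV Cons by auto
      show ?thesis
        using w' st cD True Cons card_sufs[of g'] cV
        by (intro exI[of _ "w' @ [c]"]) (auto simp: walk_snoc sufs_Cons)
    qed
  next
    case False
    define B where "B = V - sufs g"
    have Bne: "B \<noteq> {}" using False sV by (auto simp: B_def)
    have finB: "finite B" using fin by (simp add: B_def)
    define m where "m = Max (length ` B)"
    have "m \<in> length ` B" unfolding m_def using finB Bne by (intro Max_in) auto
    then obtain l where lB: "l \<in> B" and lm: "length l = m" by auto
    have lmax: "\<forall>v\<in>B. length v \<le> length l"
      using finB lm unfolding m_def by (auto intro: Max_ge)
    have lV: "l \<in> V" and lns: "l \<notin> sufs g" using lB by (auto simp: B_def)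
    then have lne: "l \<noteq> []" by auto
    then obtain c l' where lc: "l = c # l'" by (cases l) auto
    have leaf: "d # l \<notin> V" for d
    proof
      assume dl: "d # l \<in> V"
      have "d # l \<notin> sufs g" using sufs_tl[of "d # l" g] lns by auto
      then have "d # l \<in> B" using dl by (auto simp: B_def)
      then show False using lmax by fastforce
    qed
    define V' where "V' = V - {l}"
    have tc': "tclosed V'"
      unfolding tclosed_def
    proof
      fix v assume v: "v \<in> V'"
      then have vV: "v \<in> V" and vl: "v \<noteq> l" by (auto simp: V'_def)
      have "tl v \<in> V" using tc vV by (auto simp: tclosed_def)
      moreover have "tl v \<noteq> l"
      proof
        assume "tl v = l"
        then have "v \<noteq> []" using lne by auto
        then have "v = hd v # l" using \<open>tl v = l\<close> by (metis list.collapse)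
        then show False using leaf vV by metis
      qed
      ultimately show "tl v \<in> V'" by (simp add: V'_def)
    qed
    have val: "valid D V' g"
      unfolding valid_def using tc' fin nil lne rdD gV lns by (auto simp: V'_def)
    have cV': "card V' = card V - 1" using lV fin by (simp add: V'_def)
    have cVpos: "card V > 0" using lV fin card_gt_0_iff by blast
    have "card V' < n" using cV' cVpos less.prems by simp
    from less.IH[OF this refl val] obtain w' where w': "set w' \<subseteq> D" "walk [] w' = V'"
      "endp [] w' = g" "length w' = 2 * (card V' - 1) - length g" by blast
    have "l' \<in> V" using tc lV lc unfolding tclosed_def by (metis list.sel(3))
    then have l'V': "l' \<in> V'" using lc by (simp add: V'_def)
    then obtain i where i: "i \<le> length w'" "endp [] (take i w') = l'"
      using walk_endp_take w' by metis
    have rl: "rd l" using rdD lV by auto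
    have st1: "stp l' c = l" using rl lc by (cases l' rule: rd.cases) (auto simp: stp_def)
    have st2: "stp l (linv c) = l'" using lc by (simp add: stp_def)
    define w where "w = take i w' @ [c, linv c] @ drop i w'"
    have cD: "c \<in> D" using rdD lV lc by auto
    have lD: "linv c \<in> D" using invD cD by blast
    have "walk [] w = walk [] (take i w') \<union> insert l (walk l' (drop i w'))"
      using i st1 st2 r_in_walk[of l' "drop i w'"] by (simp add: w_def walk_append) blast
    also have "\<dots> = insert l V'"
      using w'(2) i walk_append[of "[]" "take i w'" "drop i w'"] r_in_walk[of l' "drop i w'"]
      by auto
    also have "\<dots> = V" using lV by (auto simp: V'_def)
    finally have wV: "walk [] w = V" .
    have "endp [] w = endp (endp [] (take i w')) (drop i w')" using i st1 st2 by (simp add: w_def)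
    also have "\<dots> = endp [] w'" by (simp flip: endp_simps(3))
    finally have we: "endp [] w = g" using w'(3) by simp
    have lg: "length g < card V'" using length_le_card[OF val] .
    have wl: "length w = 2 * (card V - 1) - length g"
    proof -
      have "length w = length w' + 2" using i(1) by (simp add: w_def)
      then show ?thesis using w'(4) cV' lg cVpos by linarith
    qed
    have "set w \<subseteq> D" using w' cD lD by (auto simp: w_def dest: in_set_takeD in_set_dropD)
    with wV we wl show ?thesis by blast
  qed
qed


lemma rd_Cons_iff: "rd (a # l) \<longleftrightarrow> rd l \<and> (l = [] \<or> hd l \<noteq> linv a)"
  by (cases l) auto

lemma rd_appendD: "rd (xs @ ys) \<Longrightarrow> rd xs \<and> rd ys"
proof (induction xs)
  case (Cons a xs)
  then show ?case by (cases xs) (auto simp: rd_Cons_iff)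
qed simp

lemma rd_join: "rd (xs @ [d]) \<Longrightarrow> rd (d # ys) \<Longrightarrow> rd (xs @ d # ys)"
proof (induction xs)
  case (Cons a xs)
  then show ?case by (cases xs) (auto simp: rd_Cons_iff)
qed simp

definition ST :: "('a \<times> bool) set \<Rightarrow> nat \<Rightarrow> ('a \<times> bool) list \<Rightarrow> ('a \<times> bool) list set set" where
  "ST D m cs = {S. [] \<in> S \<and> tclosed S \<and> (\<forall>u\<in>S. set u \<subseteq> D \<and> length u \<le> m \<and> rd (u @ cs))}"

definition AL :: "('a \<times> bool) set \<Rightarrow> ('a \<times> bool) list \<Rightarrow> ('a \<times> bool) set" where
  "AL D cs = {d\<in>D. rd (d # cs)}"

definition build :: "('a \<times> bool) set \<Rightarrow> ('a \<times> bool) list \<Rightarrow> (('a \<times> bool) \<Rightarrow> ('a \<times> bool) list set) \<Rightarrow> ('a \<times> bool) list set" where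
  "build D cs F = insert [] (\<Union>d\<in>AL D cs. (\<lambda>u. u @ [d]) ` F d)"

lemma finite_lists_le: "finite D \<Longrightarrow> finite {u. set u \<subseteq> D \<and> length u \<le> m}"
  using finite_lists_length_le[of D m] by simp

lemma ST_sub: "ST D m cs \<subseteq> Pow {u. set u \<subseteq> D \<and> length u \<le> m}"
  by (auto simp: ST_def)

lemma finite_ST: "finite D \<Longrightarrow> finite (ST D m cs)"
  by (rule finite_subset[OF ST_sub]) (simp add: finite_lists_le)

lemma finite_ST_elem: "finite D \<Longrightarrow> S \<in> ST D m cs \<Longrightarrow> finite S"
  using ST_sub[of D m cs] finite_lists_le[of D m] by (auto intro: finite_subset)

lemma Nil_notin_ST: "{} \<notin> ST D m cs"
  by (auto simp: ST_def)

lemma ST_0: "rd cs \<Longrightarrow> ST D 0 cs = {{[]}}"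
  by (auto simp: ST_def tclosed_def)

lemma build_inj: "inj_on (build D cs) (PiE (AL D cs) (\<lambda>d. insert {} (ST D m [d])))"
proof (rule inj_onI)
  fix F G assume F: "F \<in> PiE (AL D cs) (\<lambda>d. insert {} (ST D m [d]))"
    and G: "G \<in> PiE (AL D cs) (\<lambda>d. insert {} (ST D m [d]))" and eq: "build D cs F = build D cs G"
  have key: "{u. u @ [d] \<in> build D cs H} = H d" if "d \<in> AL D cs" for H d
    using that by (auto simp: build_def)
  show "F = G"
  proof (rule extensionalityI[OF PiE_E[OF F] PiE_E[OF G]])
    fix d assume "d \<in> AL D cs"
    then show "F d = G d" using key[of d F] key[of d G] eq by simp
  qed (use F G in \<open>auto simp: PiE_def\<close>)
qed

lemma drop_butlast_last: "u \<noteq> [] \<Longrightarrow> [last u] \<in> sufs u"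
proof -
  assume "u \<noteq> []"
  then obtain u' d where u: "u = u' @ [d]" by (metis append_butlast_last_id)
  have "drop (length u') u = [d]" using u by simp
  then show ?thesis using u by (auto simp: sufs_def intro!: image_eqI[of _ _ "length u'"])
qed

lemma build_image:
  assumes rcs: "rd cs"
  shows "build D cs ` PiE (AL D cs) (\<lambda>d. insert {} (ST D m [d])) = ST D (Suc m) cs"
proof
  show "build D cs ` PiE (AL D cs) (\<lambda>d. insert {} (ST D m [d])) \<subseteq> ST D (Suc m) cs"
  proof
    fix S assume "S \<in> build D cs ` PiE (AL D cs) (\<lambda>d. insert {} (ST D m [d]))"
    then obtain F where F: "F \<in> PiE (AL D cs) (\<lambda>d. insert {} (ST D m [d]))" and S: "S = build D cs F"
      by blast
    have Fd: "d \<in> AL D cs \<Longrightarrow> F d = {} \<or> F d \<in> ST D m [d]" for d using F by auto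
    have "tclosed S"
      unfolding tclosed_def S build_def
    proof (intro ballI)
      fix v assume "v \<in> insert [] (\<Union>d\<in>AL D cs. (\<lambda>u. u @ [d]) ` F d)"
      then consider "v = []" | d u where "d \<in> AL D cs" "u \<in> F d" "v = u @ [d]" by blast
      then show "tl v \<in> insert [] (\<Union>d\<in>AL D cs. (\<lambda>u. u @ [d]) ` F d)"
      proof cases
        case 2
        then have "F d \<in> ST D m [d]" using Fd by blast
        then have "tl u \<in> F d" "[] \<in> F d" using 2 by (auto simp: ST_def tclosed_def)
        then show ?thesis using 2 by (cases u) auto
      qed simp
    qed
    moreover have "\<forall>v\<in>S. set v \<subseteq> D \<and> length v \<le> Suc m \<and> rd (v @ cs)"
    proof
      fix v assume "v \<in> S"
      then consider "v = []" | d u where "d \<in> AL D cs" "u \<in> F d" "v = u @ [d]"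
        unfolding S build_def by blast
      then show "set v \<subseteq> D \<and> length v \<le> Suc m \<and> rd (v @ cs)"
      proof cases
        case 1
        show ?thesis using 1 rcs by simp
      next
        case 2
        then have "F d \<in> ST D m [d]" using Fd by blast
        then have "set u \<subseteq> D" "length u \<le> m" "rd (u @ [d])" using 2 by (auto simp: ST_def)
        moreover have "d \<in> D" "rd (d # cs)" using 2 by (auto simp: AL_def)
        ultimately show ?thesis using 2 rd_join[of u d cs] by auto
      qed
    qed
    ultimately show "S \<in> ST D (Suc m) cs" by (auto simp: ST_def S build_def)
  qed
next
  show "ST D (Suc m) cs \<subseteq> build D cs ` PiE (AL D cs) (\<lambda>d. insert {} (ST D m [d]))"
  proof
    fix S assume S: "S \<in> ST D (Suc m) cs"
    define F where "F = (\<lambda>d\<in>AL D cs. {u. u @ [d] \<in> S})"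
    have tS: "tclosed S" and nS: "[] \<in> S" and uS: "\<And>u. u \<in> S \<Longrightarrow> set u \<subseteq> D \<and> length u \<le> Suc m \<and> rd (u @ cs)"
      using S by (auto simp: ST_def)
    have "F d \<in> insert {} (ST D m [d])" if d: "d \<in> AL D cs" for d
    proof (cases "F d = {}")
      case False
      then obtain u0 where u0: "u0 @ [d] \<in> S" using d by (auto simp: F_def)
      have "sufs (u0 @ [d]) \<subseteq> S" by (rule sufs_sub[OF tS u0])
      then have "[d] \<in> S" using drop_butlast_last[of "u0 @ [d]"] by auto
      then have "[] \<in> F d" using d by (simp add: F_def)
      moreover have "tclosed (F d)"
        unfolding tclosed_def
      proof
        fix u assume "u \<in> F d"
        then have "u @ [d] \<in> S" using d by (simp add: F_def)
        then have "tl (u @ [d]) \<in> S" using tS by (auto simp: tclosed_def)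
        then show "tl u \<in> F d" using d \<open>[d] \<in> S\<close> by (cases u) (auto simp: F_def)
      qed
      moreover have "\<forall>u\<in>F d. set u \<subseteq> D \<and> length u \<le> m \<and> rd (u @ [d])"
      proof
        fix u assume "u \<in> F d"
        then have "u @ [d] \<in> S" using d by (simp add: F_def)
        from uS[OF this] show "set u \<subseteq> D \<and> length u \<le> m \<and> rd (u @ [d])"
          using rd_appendD[of "u @ [d]" cs] by auto
      qed
      ultimately show ?thesis by (simp add: ST_def)
    qed simp
    then have FP: "F \<in> PiE (AL D cs) (\<lambda>d. insert {} (ST D m [d]))" by (auto simp: F_def)
    have "build D cs F = S"
    proof
      show "build D cs F \<subseteq> S" using nS by (auto simp: build_def F_def)
      show "S \<subseteq> build D cs F"
      proof
        fix v assume v: "v \<in> S"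
        show "v \<in> build D cs F"
        proof (cases "v = []")
          case False
          then obtain u d where vd: "v = u @ [d]" by (metis append_butlast_last_id)
          have "set v \<subseteq> D" "rd (v @ cs)" using uS[OF v] by auto
          then have "d \<in> D" "rd (d # cs)" using vd rd_appendD[of u "d # cs"] by auto
          then have "d \<in> AL D cs" by (simp add: AL_def)
          then show ?thesis using v vd by (auto simp: build_def F_def)
        qed (simp add: build_def)
      qed
    qed
    then show "S \<in> build D cs ` PiE (AL D cs) (\<lambda>d. insert {} (ST D m [d]))" using FP by blast
  qed
qed


definition Zs :: "real \<Rightarrow> ('a \<times> bool) list set \<Rightarrow> real" where
  "Zs s T = (\<Sum>u\<in>T. s ^ length u)"

definition alpha :: "('a \<times> bool) set \<Rightarrow> nat \<Rightarrow> ('a \<times> bool) list \<Rightarrow> real \<Rightarrow> real" where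
  "alpha D m cs x = (\<Sum>S\<in>ST D m cs. x ^ (card S - 1))"

definition beta :: "('a \<times> bool) set \<Rightarrow> nat \<Rightarrow> ('a \<times> bool) list \<Rightarrow> real \<Rightarrow> real \<Rightarrow> real" where
  "beta D m cs x s = (\<Sum>S\<in>ST D m cs. x ^ (card S - 1) * Zs s S)"

lemma finite_AL: "finite D \<Longrightarrow> finite (AL D cs)"
  by (simp add: AL_def)

lemma PiE_fin: "F \<in> PiE (AL D cs) (\<lambda>d. insert {} (ST D m [d])) \<Longrightarrow> finite D \<Longrightarrow> d \<in> AL D cs \<Longrightarrow> finite (F d)"
proof -
  assume F: "F \<in> PiE (AL D cs) (\<lambda>d. insert {} (ST D m [d]))" and fD: "finite D" and d: "d \<in> AL D cs"
  have "F d \<in> insert {} (ST D m [d])" by (rule PiE_mem[OF F d])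
  then show ?thesis using finite_ST_elem[OF fD, of "F d" m "[d]"] by auto
qed

lemma build_parts:
  assumes fD: "finite D" and F: "F \<in> PiE (AL D cs) (\<lambda>d. insert {} (ST D m [d]))"
  shows "card (build D cs F) = Suc (\<Sum>d\<in>AL D cs. card (F d))"
    and "Zs s (build D cs F) = 1 + (\<Sum>d\<in>AL D cs. s * Zs s (F d))"
proof -
  let ?U = "\<Union>d\<in>AL D cs. (\<lambda>u. u @ [d]) ` F d"
  have nU: "[] \<notin> ?U" by auto
  have finU: "finite ?U" using fD PiE_fin[OF F fD] finite_AL by blast
  have disj: "\<forall>d\<in>AL D cs. \<forall>d'\<in>AL D cs. d \<noteq> d' \<longrightarrow> (\<lambda>u. u @ [d]) ` F d \<inter> (\<lambda>u. u @ [d']) ` F d' = {}"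
    by auto
  have inj: "inj_on (\<lambda>u. u @ [d]) A" for d :: "'a \<times> bool" and A by (auto simp: inj_on_def)
  have "card ?U = (\<Sum>d\<in>AL D cs. card ((\<lambda>u. u @ [d]) ` F d))"
    by (rule card_UN_disjoint) (use fD PiE_fin[OF F fD] finite_AL disj in auto)
  also have "\<dots> = (\<Sum>d\<in>AL D cs. card (F d))" by (simp add: card_image[OF inj])
  finally show "card (build D cs F) = Suc (\<Sum>d\<in>AL D cs. card (F d))"
    unfolding build_def using nU finU by simp
  have "Zs s ?U = (\<Sum>d\<in>AL D cs. Zs s ((\<lambda>u. u @ [d]) ` F d))"
    unfolding Zs_def by (rule sum.UNION_disjoint) (use fD PiE_fin[OF F fD] finite_AL disj in auto)
  also have "\<dots> = (\<Sum>d\<in>AL D cs. s * Zs s (F d))"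
    by (simp add: Zs_def sum.reindex[OF inj] sum_distrib_left)
  finally show "Zs s (build D cs F) = 1 + (\<Sum>d\<in>AL D cs. s * Zs s (F d))"
    unfolding build_def using nU finU by (simp add: Zs_def)
qed

lemma sum_insert_empty:
  assumes "finite D"
  shows "(\<Sum>T\<in>insert {} (ST D m cs). x ^ card T) = 1 + x * alpha D m cs x"
    and "(\<Sum>T\<in>insert {} (ST D m cs). x ^ card T * Zs s T) = x * beta D m cs x s"
proof -
  have ne: "T \<in> ST D m cs \<Longrightarrow> card T = Suc (card T - 1)" for T
    using finite_ST_elem[OF assms, of T m cs] by (auto simp: ST_def card_gt_0_iff intro!: Suc_pred[symmetric])
  have "(\<Sum>T\<in>ST D m cs. x ^ card T) = x * alpha D m cs x"
    unfolding alpha_def sum_distrib_left by (rule sum.cong[OF refl]) (subst ne, auto)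
  then show "(\<Sum>T\<in>insert {} (ST D m cs). x ^ card T) = 1 + x * alpha D m cs x"
    by (subst sum.insert[OF finite_ST[OF assms] Nil_notin_ST]) simp
  have "(\<Sum>T\<in>ST D m cs. x ^ card T * Zs s T) = x * beta D m cs x s"
    unfolding beta_def sum_distrib_left by (rule sum.cong[OF refl]) (subst ne, auto)
  then show "(\<Sum>T\<in>insert {} (ST D m cs). x ^ card T * Zs s T) = x * beta D m cs x s"
    by (subst sum.insert[OF finite_ST[OF assms] Nil_notin_ST]) (simp add: Zs_def)
qed

lemma alpha_Suc:
  assumes fD: "finite D" and rcs: "rd cs"
  shows "alpha D (Suc m) cs x = (\<Prod>d\<in>AL D cs. 1 + x * alpha D m [d] x)"
proof -
  let ?P = "PiE (AL D cs) (\<lambda>d. insert {} (ST D m [d]))"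
  have "alpha D (Suc m) cs x = (\<Sum>F\<in>?P. x ^ (card (build D cs F) - 1))"
    unfolding alpha_def build_image[OF rcs, symmetric] by (rule sum.reindex[OF build_inj, unfolded comp_def])
  also have "\<dots> = (\<Sum>F\<in>?P. \<Prod>d\<in>AL D cs. x ^ card (F d))"
    by (rule sum.cong[OF refl]) (simp add: build_parts[OF fD] power_sum)
  also have "\<dots> = (\<Prod>d\<in>AL D cs. \<Sum>T\<in>insert {} (ST D m [d]). x ^ card T)"
    by (rule prod_sum_PiE[symmetric]) (use fD finite_AL finite_ST in auto)
  also have "\<dots> = (\<Prod>d\<in>AL D cs. 1 + x * alpha D m [d] x)"
    by (simp add: sum_insert_empty[OF fD])
  finally show ?thesis .
qed

lemma beta_Suc:
  assumes fD: "finite D" and rcs: "rd cs"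
  shows "beta D (Suc m) cs x s = alpha D (Suc m) cs x +
    (\<Sum>d\<in>AL D cs. s * (x * beta D m [d] x s * (\<Prod>d'\<in>AL D cs - {d}. 1 + x * alpha D m [d'] x)))"
proof -
  let ?P = "PiE (AL D cs) (\<lambda>d. insert {} (ST D m [d]))"
  let ?A = "AL D cs"
  have "beta D (Suc m) cs x s = (\<Sum>F\<in>?P. x ^ (card (build D cs F) - 1) * Zs s (build D cs F))"
    unfolding beta_def build_image[OF rcs, symmetric] by (rule sum.reindex[OF build_inj, unfolded comp_def])
  also have "\<dots> = (\<Sum>F\<in>?P. (\<Prod>d\<in>?A. x ^ card (F d)) * (1 + (\<Sum>d\<in>?A. s * Zs s (F d))))"
    by (rule sum.cong[OF refl]) (simp add: build_parts[OF fD] power_sum)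
  also have "\<dots> = (\<Sum>F\<in>?P. \<Prod>d\<in>?A. x ^ card (F d)) +
      (\<Sum>d\<in>?A. s * (\<Sum>F\<in>?P. (\<Prod>d'\<in>?A. x ^ card (F d')) * Zs s (F d)))"
    by (simp add: algebra_simps sum.distrib sum_distrib_left sum_distrib_right sum.swap[of _ ?A])
  also have "(\<Sum>F\<in>?P. \<Prod>d\<in>?A. x ^ card (F d)) = alpha D (Suc m) cs x"
  proof -
    have "(\<Sum>F\<in>?P. \<Prod>d\<in>?A. x ^ card (F d)) = (\<Prod>d\<in>?A. \<Sum>T\<in>insert {} (ST D m [d]). x ^ card T)"
      by (rule prod_sum_PiE[symmetric]) (use fD finite_AL finite_ST in auto)
    then show ?thesis by (simp add: sum_insert_empty[OF fD] alpha_Suc[OF fD rcs])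
  qed
  also have "(\<Sum>d\<in>?A. s * (\<Sum>F\<in>?P. (\<Prod>d'\<in>?A. x ^ card (F d')) * Zs s (F d))) =
      (\<Sum>d\<in>?A. s * (x * beta D m [d] x s * (\<Prod>d'\<in>?A - {d}. 1 + x * alpha D m [d'] x)))"
  proof (rule sum.cong[OF refl])
    fix d assume d: "d \<in> ?A"
    let ?h = "\<lambda>d' T. x ^ card T * (if d' = d then Zs s T else 1)"
    have "(\<Sum>F\<in>?P. (\<Prod>d'\<in>?A. x ^ card (F d')) * Zs s (F d)) = (\<Sum>F\<in>?P. \<Prod>d'\<in>?A. ?h d' (F d'))"
      by (rule sum.cong[OF refl]) (simp add: prod.distrib d prod.delta[OF finite_AL[OF fD]])
    also have "\<dots> = (\<Prod>d'\<in>?A. \<Sum>T\<in>insert {} (ST D m [d']). ?h d' T)"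
      by (rule prod_sum_PiE[symmetric]) (use fD finite_AL finite_ST in auto)
    also have "\<dots> = (\<Sum>T\<in>insert {} (ST D m [d]). ?h d T) * (\<Prod>d'\<in>?A - {d}. \<Sum>T\<in>insert {} (ST D m [d']). ?h d' T)"
      by (rule prod.remove[OF finite_AL[OF fD] d])
    also have "\<dots> = x * beta D m [d] x s * (\<Prod>d'\<in>?A - {d}. 1 + x * alpha D m [d'] x)"
      using sum_insert_empty[OF fD] by simp
    finally show "s * (\<Sum>F\<in>?P. (\<Prod>d'\<in>?A. x ^ card (F d')) * Zs s (F d)) =
        s * (x * beta D m [d] x s * (\<Prod>d'\<in>?A - {d}. 1 + x * alpha D m [d'] x))" by simp
  qed
  finally show ?thesis .
qed


fun aa :: "nat \<Rightarrow> real \<Rightarrow> nat \<Rightarrow> real" where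
  "aa p x 0 = 1"
| "aa p x (Suc m) = (1 + x * aa p x m) ^ p"

fun bb :: "nat \<Rightarrow> real \<Rightarrow> real \<Rightarrow> nat \<Rightarrow> real" where
  "bb p x s 0 = 1"
| "bb p x s (Suc m) = aa p x (Suc m) + s * (real p * (x * bb p x s m * (1 + x * aa p x m) ^ (p - 1)))"

lemma AL_single: "d \<in> D \<Longrightarrow> AL D [d] = D - {linv d}"
  by (auto simp: AL_def)

lemma AL_Nil: "AL D [] = D"
  by (auto simp: AL_def)

lemma card_AL_single:
  assumes "finite D" "\<forall>a\<in>D. linv a \<in> D" "d \<in> D"
  shows "card (AL D [d]) = card D - 1"
  using assms by (simp add: AL_single)

lemma ST0_sums: "alpha D 0 cs x = 1" "beta D 0 cs x s = 1" if "rd cs"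
  using that by (simp_all add: alpha_def beta_def ST_0 Zs_def)

lemma alpha_beta_single:
  assumes fD: "finite D" and invD: "\<forall>a\<in>D. linv a \<in> D"
  shows "d \<in> D \<Longrightarrow> alpha D m [d] x = aa (card D - 1) x m \<and> beta D m [d] x s = bb (card D - 1) x s m"
proof (induction m arbitrary: d)
  case 0
  then show ?case using ST0_sums[of "[d]"] by simp
next
  case (Suc m)
  let ?p = "card D - 1"
  have AL: "AL D [d] = D - {linv d}" by (rule AL_single[OF Suc.prems])
  have cA: "card (AL D [d]) = ?p" by (rule card_AL_single[OF fD invD Suc.prems])
  have IH: "e \<in> AL D [d] \<Longrightarrow> alpha D m [e] x = aa ?p x m \<and> beta D m [e] x s = bb ?p x s m" for e
    using Suc.IH AL by blast
  have a: "alpha D (Suc m) [d] x = aa ?p x (Suc m)"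
    using alpha_Suc[OF fD, of "[d]" m x] IH cA by simp
  have "(\<Sum>e\<in>AL D [d]. s * (x * beta D m [e] x s * (\<Prod>d'\<in>AL D [d] - {e}. 1 + x * alpha D m [d'] x)))
      = (\<Sum>e\<in>AL D [d]. s * (x * bb ?p x s m * (1 + x * aa ?p x m) ^ (?p - 1)))"
  proof (rule sum.cong[OF refl])
    fix e assume e: "e \<in> AL D [d]"
    have "(\<Prod>d'\<in>AL D [d] - {e}. 1 + x * alpha D m [d'] x) = (\<Prod>d'\<in>AL D [d] - {e}. 1 + x * aa ?p x m)"
      using IH by (intro prod.cong) auto
    also have "\<dots> = (1 + x * aa ?p x m) ^ (?p - 1)"
      using e cA finite_AL[OF fD] by simp
    finally show "s * (x * beta D m [e] x s * (\<Prod>d'\<in>AL D [d] - {e}. 1 + x * alpha D m [d'] x)) =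
      s * (x * bb ?p x s m * (1 + x * aa ?p x m) ^ (?p - 1))" using IH[OF e] by simp
  qed
  also have "\<dots> = s * (real ?p * (x * bb ?p x s m * (1 + x * aa ?p x m) ^ (?p - 1)))"
    using cA by (simp add: sum_distrib_left[symmetric])
  finally show ?case using beta_Suc[OF fD, of "[d]" m x s] a by simp
qed

lemma alpha_beta_root:
  assumes fD: "finite D" and invD: "\<forall>a\<in>D. linv a \<in> D"
  shows "alpha D (Suc m) [] x = (1 + x * aa (card D - 1) x m) ^ card D"
    and "beta D (Suc m) [] x s = (1 + x * aa (card D - 1) x m) ^ card D
          + s * (real (card D) * (x * bb (card D - 1) x s m * (1 + x * aa (card D - 1) x m) ^ (card D - 1)))"
proof -
  let ?p = "card D - 1"
  have IH: "e \<in> D \<Longrightarrow> alpha D m [e] x = aa ?p x m \<and> beta D m [e] x s = bb ?p x s m" for e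
    by (rule alpha_beta_single[OF fD invD])
  show a: "alpha D (Suc m) [] x = (1 + x * aa ?p x m) ^ card D"
    using alpha_Suc[OF fD, of "[]" m x] IH by (simp add: AL_Nil)
  have "(\<Sum>e\<in>D. s * (x * beta D m [e] x s * (\<Prod>d'\<in>D - {e}. 1 + x * alpha D m [d'] x)))
      = (\<Sum>e\<in>D. s * (x * bb ?p x s m * (1 + x * aa ?p x m) ^ (card D - 1)))"
  proof (rule sum.cong[OF refl])
    fix e assume e: "e \<in> D"
    have "(\<Prod>d'\<in>D - {e}. 1 + x * alpha D m [d'] x) = (\<Prod>d'\<in>D - {e}. 1 + x * aa ?p x m)"
      using IH by (intro prod.cong) auto
    also have "\<dots> = (1 + x * aa ?p x m) ^ (card D - 1)"
      using e fD by simp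
    finally show "s * (x * beta D m [e] x s * (\<Prod>d'\<in>D - {e}. 1 + x * alpha D m [d'] x)) =
      s * (x * bb ?p x s m * (1 + x * aa ?p x m) ^ (card D - 1))" using IH[OF e] by simp
  qed
  also have "\<dots> = s * (real (card D) * (x * bb ?p x s m * (1 + x * aa ?p x m) ^ (card D - 1)))"
    by (simp add: sum_distrib_left[symmetric])
  finally show "beta D (Suc m) [] x s = (1 + x * aa ?p x m) ^ card D
          + s * (real (card D) * (x * bb ?p x s m * (1 + x * aa ?p x m) ^ (card D - 1)))"
    using beta_Suc[OF fD, of "[]" m x s] a by (simp add: AL_Nil)
qed


definition phi :: "('a \<times> bool) list set \<Rightarrow> ('a \<times> bool) list \<Rightarrow> nat" where
  "phi V g = 2 * (card V - 1) - length g"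

definition Pairs :: "('a \<times> bool) set \<Rightarrow> nat \<Rightarrow> (('a \<times> bool) list set \<times> ('a \<times> bool) list) set" where
  "Pairs D K = {(V, g). valid D V g \<and> phi V g = K}"

lemma words_iff: "w \<in> fim_words X \<longleftrightarrow> set w \<subseteq> X \<times> UNIV"
  by (auto simp: fim_words_def)

lemma wag_munn: "wag w v \<longleftrightarrow> walk [] w = walk [] v \<and> endp [] w = endp [] v"
  using wag_inv[of w v "[]"] munn_complete[of w v] by auto

lemma elem_eq:
  assumes "w \<in> fim_words X" "v \<in> fim_words X"
  shows "fim_elem X w = fim_elem X v \<longleftrightarrow> wag w v"
proof
  assume "fim_elem X w = fim_elem X v"
  moreover have "v \<in> fim_elem X v" using assms by (simp add: fim_elem_def wag_refl)
  ultimately have "v \<in> fim_elem X w" by simp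
  then show "wag w v" by (simp add: fim_elem_def)
next
  assume "wag w v"
  then show "fim_elem X w = fim_elem X v"
    unfolding fim_elem_def by (blast intro: wag_trans wag_sym)
qed

lemma realize:
  assumes "\<forall>a\<in>D. linv a \<in> D" "valid D V g"
  shows "\<exists>w. set w \<subseteq> D \<and> walk [] w = V \<and> endp [] w = g \<and> length w = phi V g"
  using realize_aux[OF assms(1) refl assms(2)] by (simp add: phi_def)

lemma invX: "\<forall>a\<in>X \<times> (UNIV::bool set). linv a \<in> X \<times> UNIV"
  by (auto simp: linv_def)

lemma phi_le_nat: "phi (walk [] w) (endp [] w) \<le> length w"
proof -
  have "card (walk [] w) \<ge> 1" using r_in_walk[of "[]" w] finite_walk[of "[]" w]
    by (metis One_nat_def Suc_leI card_gt_0_iff empty_iff)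
  then show ?thesis using phi_le[of w] by (simp add: phi_def)
qed

lemma fim_length_elem:
  assumes w: "w \<in> fim_words X"
  shows "fim_length (fim_elem X w) = phi (walk [] w) (endp [] w)"
proof -
  let ?P = "phi (walk [] w) (endp [] w)"
  have val: "valid (X \<times> UNIV) (walk [] w) (endp [] w)" using w by (simp add: words_iff valid_walk)
  obtain w0 where w0: "set w0 \<subseteq> X \<times> UNIV" "walk [] w0 = walk [] w" "endp [] w0 = endp [] w"
      "length w0 = ?P"
    using realize[OF invX val] by blast
  have w0e: "w0 \<in> fim_elem X w"
    using w0 by (simp add: fim_elem_def words_iff wag_munn)
  show ?thesis unfolding fim_length_def
  proof (rule Least_equality)
    show "\<exists>v\<in>fim_elem X w. length v = ?P" using w0e w0 by blast
  next
    fix n assume "\<exists>v\<in>fim_elem X w. length v = n"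
    then obtain v where v: "v \<in> fim_elem X w" "length v = n" by blast
    then have "wag w v" by (simp add: fim_elem_def)
    then have "phi (walk [] v) (endp [] v) = ?P" by (simp add: wag_munn)
    then show "?P \<le> n" using phi_le_nat[of v] v by simp
  qed
qed

lemma card_sphere:
  fixes X :: "'a set"
  shows "card (fim_sphere X K) = card (Pairs (X \<times> (UNIV::bool set)) K)"
proof -
  let ?D = "X \<times> (UNIV::bool set)"
  define rz where "rz P = (SOME w. set w \<subseteq> ?D \<and> walk [] w = fst P \<and> endp [] w = snd P)" for P
  have rz: "set (rz P) \<subseteq> ?D \<and> walk [] (rz P) = fst P \<and> endp [] (rz P) = snd P" if PP: "P \<in> Pairs ?D K" for P
  proof -
    obtain V g where P: "P = (V, g)" "valid ?D V g" using PP unfolding Pairs_def by blast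
    obtain w where "set w \<subseteq> ?D \<and> walk [] w = V \<and> endp [] w = g"
      using realize[OF invX P(2)] by blast
    then have "set w \<subseteq> ?D \<and> walk [] w = fst P \<and> endp [] w = snd P" using P by simp
    then show ?thesis unfolding rz_def by (rule someI)
  qed
  define f where "f P = fim_elem X (rz P)" for P
  have inj: "inj_on f (Pairs ?D K)"
  proof (rule inj_onI)
    fix P Q assume P: "P \<in> Pairs ?D K" and Q: "Q \<in> Pairs ?D K" and eq: "f P = f Q"
    have "wag (rz P) (rz Q)" using eq rz[OF P] rz[OF Q] elem_eq[of "rz P" X "rz Q"]
      by (simp add: f_def words_iff)
    then show "P = Q" using rz[OF P] rz[OF Q] by (simp add: wag_munn prod_eq_iff)
  qed
  have img: "f ` Pairs ?D K = fim_sphere X K"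
  proof
    show "f ` Pairs ?D K \<subseteq> fim_sphere X K"
    proof
      fix e assume "e \<in> f ` Pairs ?D K"
      then obtain P where P: "P \<in> Pairs ?D K" "e = f P" by blast
      have rw: "rz P \<in> fim_words X" using rz[OF P(1)] by (simp add: words_iff)
      have "fim_length e = phi (fst P) (snd P)" using fim_length_elem[OF rw] rz[OF P(1)] P
        by (simp add: f_def)
      also have "\<dots> = K" using P(1) by (auto simp: Pairs_def)
      finally show "e \<in> fim_sphere X K" using rw P by (auto simp: fim_sphere_def FIM_def f_def)
    qed
  next
    show "fim_sphere X K \<subseteq> f ` Pairs ?D K"
    proof
      fix e assume e: "e \<in> fim_sphere X K"
      then obtain w where w: "w \<in> fim_words X" "e = fim_elem X w" by (auto simp: fim_sphere_def FIM_def)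
      let ?P = "(walk [] w, endp [] w)"
      have PK: "?P \<in> Pairs ?D K" using e w fim_length_elem[OF w(1)]
        by (auto simp: Pairs_def fim_sphere_def valid_walk words_iff)
      have "wag w (rz ?P)" using rz[OF PK] by (simp add: wag_munn)
      then have "f ?P = e" using w rz[OF PK] elem_eq[of w X "rz ?P"] by (simp add: f_def words_iff)
      then show "e \<in> f ` Pairs ?D K" using PK by blast
    qed
  qed
  show ?thesis using card_image[OF inj] img by simp
qed


lemma valid_ST: "valid D V g \<Longrightarrow> V \<in> ST D (card V - 1) []"
proof -
  assume v: "valid D V g"
  have "valid D V u" if "u \<in> V" for u using v that by (simp add: valid_def)
  then have "length u \<le> card V - 1" if "u \<in> V" for u using length_le_card that by fastforce
  then show ?thesis using v by (auto simp: ST_def valid_def)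
qed

lemma ST_valid: "finite D \<Longrightarrow> V \<in> ST D M [] \<Longrightarrow> g \<in> V \<Longrightarrow> valid D V g"
  using finite_ST_elem[of D V M "[]"] by (auto simp: ST_def valid_def)

lemma card_le_phi: "valid D V g \<Longrightarrow> card V - 1 \<le> phi V g"
  using length_le_card[of D V g] by (simp add: phi_def)

lemma ST_mono: "M \<le> M' \<Longrightarrow> ST D M cs \<subseteq> ST D M' cs"
  by (auto simp: ST_def)

lemma Pairs_sub: "Pairs D K \<subseteq> Sigma (ST D K []) (\<lambda>V. V)"
proof
  fix P assume "P \<in> Pairs D K"
  then obtain V g where P: "P = (V, g)" "valid D V g" "phi V g = K" unfolding Pairs_def by blast
  have "V \<in> ST D (card V - 1) []" by (rule valid_ST[OF P(2)])
  moreover have "card V - 1 \<le> K" using card_le_phi[OF P(2)] P(3) by simp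
  ultimately have "V \<in> ST D K []" using ST_mono by blast
  then show "P \<in> Sigma (ST D K []) (\<lambda>V. V)" using P(1,2) by (auto simp: valid_def)
qed

lemma finite_Sig: "finite D \<Longrightarrow> finite (Sigma (ST D M []) (\<lambda>V. V))"
  using finite_ST[of D M "[]"] finite_ST_elem[of D _ M "[]"] by (intro finite_SigmaI) auto

lemma finite_Pairs: "finite D \<Longrightarrow> finite (Pairs D K)"
  using finite_subset[OF Pairs_sub finite_Sig] by blast

lemma beta_eq:
  assumes fD: "finite D" and t: "t > 0"
  shows "beta D M [] (t^2) (1/t) = (\<Sum>P\<in>Sigma (ST D M []) (\<lambda>V. V). t ^ phi (fst P) (snd P))"
proof -
  have "beta D M [] (t^2) (1/t) = (\<Sum>V\<in>ST D M []. \<Sum>g\<in>V. t ^ phi V g)"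
    unfolding beta_def Zs_def sum_distrib_left
  proof (intro sum.cong refl)
    fix V g assume V: "V \<in> ST D M []" and g: "g \<in> V"
    have "length g < card V" using length_le_card ST_valid[OF fD V g] by blast
    then have "t ^ phi V g = t ^ (2 * (card V - 1)) / t ^ length g"
      using t by (simp add: phi_def power_diff)
    then show "(t^2) ^ (card V - 1) * (1 / t) ^ length g = t ^ phi V g"
      by (simp add: power_mult power_one_over divide_inverse power_inverse)
  qed
  also have "\<dots> = (\<Sum>P\<in>Sigma (ST D M []) (\<lambda>V. V). t ^ phi (fst P) (snd P))"
    by (subst sum.Sigma) (use finite_ST[OF fD] finite_ST_elem[OF fD] in \<open>auto simp: case_prod_beta\<close>)
  finally show ?thesis .
qed

lemma sum_Pairs: "(\<Sum>P\<in>Pairs D K. t ^ phi (fst P) (snd P)) = real (card (Pairs D K)) * t ^ K"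
  by (simp add: Pairs_def case_prod_beta)

lemma upper_count:
  assumes fD: "finite D" and t: "t > 0"
  shows "real (card (Pairs D K)) * t ^ K \<le> beta D K [] (t^2) (1/t)"
  unfolding beta_eq[OF fD t] sum_Pairs[symmetric]
  by (rule sum_mono2[OF finite_Sig[OF fD] Pairs_sub]) (use t in auto)

lemma lower_count:
  assumes fD: "finite D" and t: "t > 0"
  shows "beta D M [] (t^2) (1/t) \<le> (\<Sum>K\<le>2 * card {u. set u \<subseteq> D \<and> length u \<le> M}. real (card (Pairs D K)) * t ^ K)"
proof -
  let ?L = "2 * card {u. set u \<subseteq> D \<and> length u \<le> M}"
  have disj: "\<forall>i\<in>{..?L}. \<forall>j\<in>{..?L}. i \<noteq> j \<longrightarrow> Pairs D i \<inter> Pairs D j = {}"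
    by (auto simp: Pairs_def)
  have "(\<Sum>K\<le>?L. real (card (Pairs D K)) * t ^ K) = (\<Sum>K\<le>?L. \<Sum>P\<in>Pairs D K. t ^ phi (fst P) (snd P))"
    by (simp add: sum_Pairs)
  also have "\<dots> = (\<Sum>P\<in>(\<Union>K\<le>?L. Pairs D K). t ^ phi (fst P) (snd P))"
    by (rule sum.UNION_disjoint[symmetric]) (use finite_Pairs[OF fD] disj in auto)
  finally have eq: "(\<Sum>K\<le>?L. real (card (Pairs D K)) * t ^ K) = \<dots>" .
  have sub: "Sigma (ST D M []) (\<lambda>V. V) \<subseteq> (\<Union>K\<le>?L. Pairs D K)"
  proof
    fix P assume "P \<in> Sigma (ST D M []) (\<lambda>V. V)"
    then obtain V g where P: "P = (V, g)" "V \<in> ST D M []" "g \<in> V" by blast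
    have v: "valid D V g" by (rule ST_valid[OF fD P(2,3)])
    have "V \<subseteq> {u. set u \<subseteq> D \<and> length u \<le> M}" using P(2) by (auto simp: ST_def)
    then have "card V \<le> card {u. set u \<subseteq> D \<and> length u \<le> M}"
      by (rule card_mono[OF finite_lists_le[OF fD]])
    then have "phi V g \<le> ?L" by (simp add: phi_def)
    then show "P \<in> (\<Union>K\<le>?L. Pairs D K)" using v P(1) by (auto simp: Pairs_def)
  qed
  show ?thesis unfolding eq beta_eq[OF fD t]
    by (rule sum_mono2) (use finite_Pairs[OF fD] sub t in auto)
qed


definition ff :: "nat \<Rightarrow> real \<Rightarrow> real" where
  "ff p z = real p ^ p * z ^ (p - 2) - (real p * z - 1) ^ (p - 1)"

lemma Q_mono:
  fixes z1 z2 :: real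
  assumes p: "p \<ge> 3" and z1: "1 / real p < z1" and z12: "z1 < z2"
  shows "(real p * z1 - 1) ^ (p - 1) * z2 ^ (p - 2) < (real p * z2 - 1) ^ (p - 1) * z1 ^ (p - 2)"
proof -
  obtain k where kk0: "p = 3 + k" using le_Suc_ex[OF p] by blast
  then have kk: "p = Suc (Suc (Suc k))" by simp
  have k: "p - 2 = Suc k" "p - 1 = Suc (Suc k)" using kk by simp_all
  have pp: "real p > 0" using p by simp
  define a where "a = real p * z1 - 1"
  define b where "b = real p * z2 - 1"
  have a0: "a > 0" using z1 pp unfolding a_def by (simp add: field_simps)
  have z10: "z1 > 0" using z1 pp by (meson divide_pos_pos less_trans zero_less_one)
  have ab: "a < b" using z12 pp unfolding a_def b_def by simp
  have az: "a * z2 < b * z1" using z12 unfolding a_def b_def by (simp add: algebra_simps)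
  have az0: "0 < a * z2" using a0 z10 z12 by simp
  have "(a * z2) ^ (p - 2) \<le> (b * z1) ^ (p - 2)"
    using az az0 by (intro power_mono) auto
  moreover have "0 < (a * z2) ^ (p - 2)" using az0 by simp
  ultimately have "a * (a * z2) ^ (p - 2) < b * (b * z1) ^ (p - 2)"
    using ab a0 by (intro mult_less_le_imp_less) auto
  moreover have "a ^ (p - 1) * z2 ^ (p - 2) = a * (a * z2) ^ (p - 2)"
    unfolding k by (simp add: power_mult_distrib)
  moreover have "b ^ (p - 1) * z1 ^ (p - 2) = b * (b * z1) ^ (p - 2)"
    unfolding k by (simp add: power_mult_distrib)
  ultimately show ?thesis unfolding a_def b_def by simp
qed

lemma p_decomp: "p \<ge> 3 \<Longrightarrow> \<exists>k. p = Suc (Suc (Suc k)) \<and> p - 2 = Suc k \<and> p - 1 = Suc (Suc k)"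
proof -
  assume p: "p \<ge> 3"
  obtain k where "p = 3 + k" using le_Suc_ex[OF p] by blast
  then show ?thesis by (intro exI[of _ k]) simp
qed

lemma ff_p_pos: "p \<ge> 3 \<Longrightarrow> ff p (real p) > 0"
proof -
  assume p: "p \<ge> 3"
  obtain k where k: "p = Suc (Suc (Suc k))" "p - 2 = Suc k" "p - 1 = Suc (Suc k)" using p_decomp[OF p] by blast
  have rp: "real p \<ge> 1" using p by simp
  have "1 \<le> real p * real p" using mult_mono[OF rp rp] by simp
  then have "(real p * real p - 1) ^ (p - 1) < (real p * real p) ^ (p - 1)"
    using p by (intro power_strict_mono) auto
  also have "\<dots> = real p ^ p * real p ^ (p - 2)"
    unfolding k(2,3) by (subst (2) k(1)) (simp add: power_mult_distrib)
  finally show ?thesis by (simp add: ff_def)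
qed

lemma ff_p1_neg: "p \<ge> 3 \<Longrightarrow> ff p (real p + 1) < 0"
proof -
  assume p: "p \<ge> 3"
  obtain k where k: "p = Suc (Suc (Suc k))" "p - 2 = Suc k" "p - 1 = Suc (Suc k)" using p_decomp[OF p] by blast
  define c where "c = real p * (real p + 1)"
  have rp: "real p \<ge> 1" using p by simp
  have "1 * 1 < real p * (real p + 1)" using rp by (intro mult_le_less_imp_less) auto
  then have c1: "c > 1" unfolding c_def by simp
  have B: "1 + real (p - 1) * (- 1 / c) \<le> (1 + (- 1 / c)) ^ (p - 1)"
    using c1 by (intro Bernoulli_inequality) (simp add: field_simps)
  have e1: "(real p * (real p + 1) - 1) ^ (p - 1) = c ^ (p - 1) * (1 + (- 1 / c)) ^ (p - 1)"
    using c1 by (simp add: c_def power_mult_distrib[symmetric] algebra_simps)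
  have e2: "real p ^ p * (real p + 1) ^ (p - 2) = c ^ (p - 1) * (real p / (real p + 1))"
  proof -
    have "c ^ (p - 1) = real p ^ (p - 1) * (real p + 1) ^ (p - 1)" by (simp add: c_def power_mult_distrib)
    moreover have "(real p + 1) ^ (p - 1) = (real p + 1) ^ (p - 2) * (real p + 1)" using k by simp
    moreover have "real p ^ p = real p ^ (p - 1) * real p" using k by simp
    ultimately show ?thesis by (simp add: field_simps)
  qed
  have "real p / (real p + 1) < 1 + real (p - 1) * (- 1 / c)"
  proof -
    have r1: "real (p - 1) = real p - 1" using p by simp
    have e: "real (p - 1) * (1 / c) = ((real p - 1) / real p) * (1 / (real p + 1))"
      unfolding r1 c_def by simp
    have "(real p - 1) / real p < 1" using rp by simp
    then have "((real p - 1) / real p) * (1 / (real p + 1)) < 1 * (1 / (real p + 1))"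
      using rp by (intro mult_strict_right_mono) auto
    moreover have "real p / (real p + 1) = 1 - 1 / (real p + 1)" using rp by (simp add: field_simps)
    ultimately show ?thesis using e by simp
  qed
  also have "\<dots> \<le> (1 + (- 1 / c)) ^ (p - 1)" by (rule B)
  finally have "c ^ (p - 1) * (real p / (real p + 1)) < c ^ (p - 1) * (1 + (- 1 / c)) ^ (p - 1)"
    using c1 by (intro mult_strict_left_mono) auto
  then show ?thesis unfolding ff_def using e1 e2 by (simp add: algebra_simps)
qed

lemma isCont_ff: "isCont (ff p) x"
  unfolding ff_def by (intro continuous_intros)

lemma root_exists: "p \<ge> 3 \<Longrightarrow> \<exists>y. real p < y \<and> y < real p + 1 \<and> ff p y = 0"
proof -
  assume p: "p \<ge> 3"
  obtain y where y: "real p \<le> y" "y \<le> real p + 1" "ff p y = 0"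
    using IVT2[of "ff p" "real p + 1" 0 "real p"] ff_p_pos[OF p] ff_p1_neg[OF p] isCont_ff by force
  have "y \<noteq> real p" "y \<noteq> real p + 1" using y ff_p_pos[OF p] ff_p1_neg[OF p] by auto
  then show ?thesis using y by (intro exI[of _ y]) auto
qed

lemma ff_sign:
  assumes p: "p \<ge> 3" and y: "1 / real p < y" "ff p y = 0" and z: "1 / real p < z"
  shows "(z < y \<longrightarrow> ff p z > 0) \<and> (y < z \<longrightarrow> ff p z < 0)"
proof -
  have pp: "real p > 0" using p by simp
  have y0: "y > 0" using y pp by (meson divide_pos_pos less_trans zero_less_one)
  have z0: "z > 0" using z pp by (meson divide_pos_pos less_trans zero_less_one)
  have yr: "(real p * y - 1) ^ (p - 1) = real p ^ p * y ^ (p - 2)" using y(2) by (simp add: ff_def)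
  have A: "ff p z > 0" if zy: "z < y"
  proof -
    have "(real p * z - 1) ^ (p - 1) * y ^ (p - 2) < (real p * y - 1) ^ (p - 1) * z ^ (p - 2)"
      by (rule Q_mono[OF p z zy])
    also have "\<dots> = (real p ^ p * z ^ (p - 2)) * y ^ (p - 2)" unfolding yr by simp
    finally have "(real p * z - 1) ^ (p - 1) < real p ^ p * z ^ (p - 2)"
      using y0 by (simp add: mult_less_cancel_right)
    then show ?thesis by (simp add: ff_def)
  qed
  have B: "ff p z < 0" if zy: "y < z"
  proof -
    have "(real p ^ p * z ^ (p - 2)) * y ^ (p - 2) = (real p * y - 1) ^ (p - 1) * z ^ (p - 2)"
      unfolding yr by simp
    also have "\<dots> < (real p * z - 1) ^ (p - 1) * y ^ (p - 2)"
      by (rule Q_mono[OF p y(1) zy])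
    finally have "real p ^ p * z ^ (p - 2) < (real p * z - 1) ^ (p - 1)"
      using y0 by (simp add: mult_less_cancel_right)
    then show ?thesis by (simp add: ff_def)
  qed
  show ?thesis using A B by blast
qed

lemma largest_root:
  assumes p: "p \<ge> 3" and y: "real p < y" "ff p y = 0" and z: "ff p z = 0"
  shows "z \<le> y"
proof (rule ccontr)
  assume "\<not> z \<le> y"
  then have zy: "y < z" by simp
  have r3: "real p \<ge> 3" using p by simp
  then have "1 / real p \<le> 1" by simp
  then have "1 / real p < real p" using r3 by linarith
  then have "1 / real p < y" using y by simp
  then have "ff p z < 0" using ff_sign[OF p _ y(2), of z] zy by auto
  then show False using z by simp
qed

lemma ff_algebraic: "p \<ge> 3 \<Longrightarrow> ff p y = 0 \<Longrightarrow> algebraic y"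
proof -
  assume p: "p \<ge> 3" and y: "ff p y = 0"
  define P :: "real poly" where "P = monom (real p ^ p) (p - 2) - [:-1, real p:] ^ (p - 1)"
  have ev: "poly P z = ff p z" for z by (simp add: P_def ff_def poly_monom algebra_simps)
  have intc: "\<forall>i. coeff q i \<in> \<int> \<Longrightarrow> \<forall>i. coeff r i \<in> \<int> \<Longrightarrow> \<forall>i. coeff (q * r) i \<in> \<int>" for q r :: "real poly"
    by (auto simp: coeff_mult intro!: Ints_sum Ints_mult)
  have "\<forall>i. coeff ([:-1, real p:] ^ n) i \<in> \<int>" for n
  proof (induction n)
    case 0 then show ?case by (simp add: coeff_1)
  next
    case (Suc n)
    have c1: "\<forall>i. coeff [:-1, real p:] i \<in> \<int>" by (auto simp: coeff_pCons split: nat.split)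
    show ?case using intc[OF c1 Suc] by simp
  qed
  then have "\<forall>i. coeff P i \<in> \<int>" by (auto simp: P_def coeff_monom intro!: Ints_diff)
  moreover have "P \<noteq> 0" using ev[of "real p"] ff_p_pos[OF p] by auto
  ultimately show ?thesis using ev[of y] y by (intro algebraicI) auto
qed


lemma bern_aux:
  fixes s c :: real
  assumes s: "0 < s" "s \<le> 1" and c: "c \<ge> real k + 1" "c > 1"
  shows "s * (c - s) ^ k \<le> (c - 1) ^ k"
proof -
  have cs: "c - s > 0" using s c by simp
  define w where "w = (1 - s) / (c - s)"
  have w0: "w \<ge> 0" using s cs by (simp add: w_def)
  have w1: "w \<le> 1" using s cs c by (simp add: w_def field_simps)
  have e: "c - 1 = (c - s) * (1 + (- w))" using cs by (simp add: w_def field_simps)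
  have "1 + real k * (- w) \<le> (1 + (- w)) ^ k" using w1 by (intro Bernoulli_inequality) simp
  moreover have "s \<le> 1 + real k * (- w)"
  proof -
    have "(1 - s) * (c - s - real k) \<ge> 0" using s c by simp
    then have "s * (c - s) \<le> (c - s) - real k * (1 - s)" by (simp add: algebra_simps)
    then show ?thesis using cs by (simp add: w_def field_simps)
  qed
  ultimately have "s \<le> (1 + (- w)) ^ k" by linarith
  then have "(c - s) ^ k * s \<le> (c - s) ^ k * (1 + (- w)) ^ k"
    using cs by (intro mult_left_mono) auto
  then show ?thesis unfolding e power_mult_distrib by (simp add: mult.commute)
qed

lemma fixpoint_ratio:
  assumes p: "p \<ge> 3" and z: "z \<ge> real p" and fz: "ff p z > 0"
    and u: "u > 0" "u = 1 + u ^ p / z ^ 2"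
  shows "real p * u ^ (p - 1) / z > 1"
proof (rule ccontr)
  obtain k where k: "p = Suc (Suc (Suc k))" "p - 2 = Suc k" "p - 1 = Suc (Suc k)" using p_decomp[OF p] by blast
  assume "\<not> real p * u ^ (p - 1) / z > 1"
  then have s1: "real p * u ^ (p - 1) / z \<le> 1" by simp
  define s where "s = real p * u ^ (p - 1) / z"
  have pp: "real p \<ge> 3" using p by simp
  have z0: "z > 0" using z pp by simp
  have s0: "s > 0" using u z0 pp by (simp add: s_def)
  have up1: "u ^ (p - 1) = s * z / real p" using z0 pp by (simp add: s_def)
  have up: "u ^ p = u * (s * z / real p)"
    using up1 k by (metis power_Suc)
  have "u = 1 + u * s / (real p * z)" using u(2) up z0 pp by (simp add: field_simps power2_eq_square)
  then have uu: "u * (real p * z - s) = real p * z" using z0 pp by (simp add: field_simps)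
  have "(u * (real p * z - s)) ^ (p - 1) = (real p * z) ^ (p - 1)" using uu by simp
  then have "(s * z / real p) * (real p * z - s) ^ (p - 1) = real p ^ (p - 1) * z ^ (p - 1)"
    unfolding power_mult_distrib up1 .
  then have eq: "(s * z / real p) * (real p * z - s) ^ (p - 1) = real p ^ (p - 1) * z ^ (p - 1)" .
  have "s * (real p * z - s) ^ (p - 1) = ((s * z / real p) * (real p * z - s) ^ (p - 1)) * (real p / z)"
    using z0 pp by (simp add: field_simps)
  also have "\<dots> = (real p ^ (p - 1) * real p) * (z ^ (p - 1) / z)" unfolding eq by (simp add: field_simps)
  also have "real p ^ (p - 1) * real p = real p ^ p" using k by (metis power_Suc2)
  also have "z ^ (p - 1) / z = z ^ (p - 2)" using z0 k by simp
  finally have key: "s * (real p * z - s) ^ (p - 1) = real p ^ p * z ^ (p - 2)" .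
  have "s * (real p * z - s) ^ (p - 1) \<le> (real p * z - 1) ^ (p - 1)"
  proof (rule bern_aux[OF s0 s1[folded s_def]])
    have "real p * z \<ge> real p * 1" using z pp by (intro mult_left_mono) auto
    then show "real p * z \<ge> real (p - 1) + 1" using p by simp
    show "real p * z > 1" using \<open>real p * z \<ge> real p * 1\<close> pp by linarith
  qed
  then have "ff p z \<le> 0" unfolding ff_def key by simp
  then show False using fz by simp
qed


lemma U_facts:
  assumes p: "p \<ge> 3" and y: "y > real p" "ff p y = 0"
  defines "U \<equiv> real p * y / (real p * y - 1)"
  shows "U \<ge> 1" "U ^ (p - 1) = y / real p" "1 + U ^ p / y ^ 2 = U"
proof -
  obtain k where k: "p = Suc (Suc (Suc k))" "p - 2 = Suc k" "p - 1 = Suc (Suc k)" using p_decomp[OF p] by blast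
  have pp: "real p \<ge> 3" using p by simp
  have y0: "y > 0" using y pp by simp
  have "1 * 1 < real p * y" using pp y by (intro mult_le_less_imp_less) auto
  then have py: "real p * y > 1" by simp
  show "U \<ge> 1" using py by (simp add: U_def field_simps)
  have r: "(real p * y - 1) ^ (p - 1) = real p ^ p * y ^ (p - 2)" using y(2) by (simp add: ff_def)
  have "U ^ (p - 1) = (real p * y) ^ (p - 1) / (real p * y - 1) ^ (p - 1)" by (simp add: U_def power_divide)
  also have "\<dots> = (real p ^ (p - 1) * y ^ (p - 1)) / (real p ^ p * y ^ (p - 2))" unfolding r power_mult_distrib ..
  also have "real p ^ p = real p ^ (p - 1) * real p" using k by (metis power_Suc2)
  also have "y ^ (p - 1) = y ^ (p - 2) * y" using k by simp
  finally show U1: "U ^ (p - 1) = y / real p" using y0 pp by (simp add: field_simps)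
  have "U ^ p = U * U ^ (p - 1)" using k by (metis power_Suc)
  then have "U ^ p = U * (y / real p)" using U1 by simp
  then show "1 + U ^ p / y ^ 2 = U" using py y0 pp by (simp add: U_def field_simps power2_eq_square)
qed

lemma aa_ge1: "x \<ge> 0 \<Longrightarrow> aa p x m \<ge> 1"
  by (induction m) (auto intro!: one_le_power simp: zero_le_mult_iff)

lemma upper_seq:
  assumes p: "p \<ge> 3" and y: "y > real p" "ff p y = 0" and t: "t > 0" "t * y < 1"
  defines "U \<equiv> real p * y / (real p * y - 1)"
  shows "aa p (t^2) m \<le> U ^ p \<and> 0 \<le> bb p (t^2) (1/t) m \<and> bb p (t^2) (1/t) m \<le> U ^ p / (1 - t * y)"
proof (induction m)
  note UF = U_facts[OF p y, folded U_def]
  have U1: "U \<ge> 1" using UF by simp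
  have Up: "U ^ p \<ge> 1" using U1 by simp
  have ty: "1 - t * y > 0" using t by simp
  have y0: "y > 0" using y p by simp
  case 0
  have "t * y \<ge> 0" using t y0 by simp
  then show ?case using Up ty by (simp add: field_simps)
next
  note UF = U_facts[OF p y, folded U_def]
  have U1: "U \<ge> 1" using UF by simp
  have Up: "U ^ p \<ge> 1" using U1 by simp
  have ty: "1 - t * y > 0" using t by simp
  have y0: "y > 0" using y p by simp
  case (Suc m)
  let ?x = "t^2" and ?a = "aa p (t^2) m" and ?b = "bb p (t^2) (1/t) m"
  have a1: "?a \<ge> 1" by (rule aa_ge1) simp
  have xle: "?x \<le> 1 / y ^ 2"
  proof -
    have "t \<le> 1 / y" using t y0 by (simp add: field_simps)
    then have "t ^ 2 \<le> (1 / y) ^ 2" using t by (intro power_mono) auto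
    then show ?thesis by (simp add: power_divide)
  qed
  have ule: "1 + ?x * ?a \<le> U"
  proof -
    have "?x * ?a \<le> (1 / y ^ 2) * U ^ p" using xle Suc.IH a1 by (intro mult_mono) auto
    then show ?thesis using UF(3) by simp
  qed
  have u0: "1 + ?x * ?a \<ge> 0" using a1 by simp
  have A: "aa p ?x (Suc m) \<le> U ^ p" using ule u0 by (simp add: power_mono)
  have upm: "(1 + ?x * ?a) ^ (p - 1) \<le> U ^ (p - 1)" using ule u0 by (simp add: power_mono)
  have b0: "?b \<ge> 0" using Suc.IH by simp
  have eqb: "bb p ?x (1/t) (Suc m) = aa p ?x (Suc m) + (real p * t * (1 + ?x * ?a) ^ (p - 1)) * ?b"
    using t by (simp add: power2_eq_square field_simps)
  have "(real p * t * (1 + ?x * ?a) ^ (p - 1)) * ?b \<le> (real p * t * U ^ (p - 1)) * ?b"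
    using upm b0 t by (intro mult_right_mono mult_left_mono) auto
  also have "real p * t * U ^ (p - 1) = t * y" using UF(2) p by simp
  finally have "bb p ?x (1/t) (Suc m) \<le> U ^ p + (t * y) * ?b" using eqb A by linarith
  also have "\<dots> \<le> U ^ p + (t * y) * (U ^ p / (1 - t * y))"
    using Suc.IH t y0 by (intro add_left_mono mult_left_mono) auto
  also have "\<dots> = U ^ p / (1 - t * y)" using ty by (simp add: field_simps)
  finally have B: "bb p ?x (1/t) (Suc m) \<le> U ^ p / (1 - t * y)" .
  have B0: "bb p ?x (1/t) (Suc m) \<ge> 0" using eqb A b0 t a1 aa_ge1[of ?x p "Suc m"] by simp
  show ?case using A B B0 by simp
qed


definition rb :: "nat \<Rightarrow> real \<Rightarrow> nat \<Rightarrow> real" where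
  "rb p t m = (1 + t^2 * aa p (t^2) m) ^ Suc p
     + 1 / t * (real (Suc p) * (t^2 * bb p (t^2) (1/t) m * (1 + t^2 * aa p (t^2) m) ^ p))"

lemma aa_mono: "x \<ge> 0 \<Longrightarrow> aa p x m \<le> aa p x (Suc m)"
proof (induction m)
  case 0 then show ?case by (simp add: one_le_power)
next
  case (Suc m)
  have "1 + x * aa p x m \<le> 1 + x * aa p x (Suc m)" using Suc by (simp add: mult_left_mono)
  moreover have "0 \<le> 1 + x * aa p x m" using aa_ge1[OF Suc.prems, of p m] Suc.prems by simp
  ultimately show ?case by (simp add: power_mono)
qed

lemma bb_nonneg: "x \<ge> 0 \<Longrightarrow> s \<ge> 0 \<Longrightarrow> bb p x s m \<ge> 0"
proof (induction m)
  case (Suc m)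
  have "aa p x (Suc m) \<ge> 1" by (rule aa_ge1[OF Suc.prems(1)])
  moreover have "0 \<le> 1 + x * aa p x m" using aa_ge1[OF Suc.prems(1), of p m] Suc.prems by simp
  ultimately show ?case using Suc by simp
qed simp

lemma lower_seq:
  assumes p: "p \<ge> 3" and y: "y > real p" "ff p y = 0" and z: "z \<ge> real p" "z < y"
  shows "\<exists>m. rb p (1 / z) m > K"
proof (rule ccontr)
  assume "\<not> (\<exists>m. rb p (1 / z) m > K)"
  then have bnd: "rb p (1 / z) m \<le> K" for m by (simp add: not_less)
  define t where "t = 1 / z"
  have pp: "real p \<ge> 3" using p by simp
  have z0: "z > 0" using z pp by simp
  have t0: "t > 0" using z0 by (simp add: t_def)
  define x where "x = t ^ 2"
  have x0: "x > 0" using t0 by (simp add: x_def)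
  let ?a = "aa p x" and ?b = "bb p x (1/t)"
  have a1: "?a m \<ge> 1" for m using aa_ge1 x0 by simp
  have b0: "?b m \<ge> 0" for m using bb_nonneg x0 t0 by simp
  have rbe: "rb p t m = (1 + x * ?a m) ^ Suc p + real (Suc p) * t * ?b m * (1 + x * ?a m) ^ p" for m
    using t0 by (simp add: rb_def x_def power2_eq_square field_simps)
  have u1: "1 + x * ?a m \<ge> 1" for m using x0 a1[of m] by simp
  have abnd: "?a m \<le> K / x" for m
  proof -
    have "x * ?a m \<le> 1 + x * ?a m" by simp
    also have "\<dots> \<le> (1 + x * ?a m) ^ Suc p" using u1[of m] by (intro self_le_power) auto
    also have "\<dots> \<le> rb p t m" unfolding rbe using t0 b0[of m] u1[of m] by simp
    also have "\<dots> \<le> K" using bnd[of m] by (simp add: t_def)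
    finally show ?thesis using x0 by (simp add: field_simps)
  qed
  have bbnd: "?b m \<le> K / t" for m
  proof -
    have c1: "(1 + x * ?a m) ^ p \<ge> 1" using u1[of m] by (intro one_le_power) auto
    have "1 * 1 \<le> real (Suc p) * (1 + x * ?a m) ^ p" using c1 by (intro mult_mono) auto
    then have "t * ?b m * 1 \<le> t * ?b m * (real (Suc p) * (1 + x * ?a m) ^ p)"
      using t0 b0[of m] by (intro mult_left_mono) auto
    then have "t * ?b m \<le> real (Suc p) * t * ?b m * (1 + x * ?a m) ^ p" by (simp add: algebra_simps)
    also have "\<dots> \<le> rb p t m" unfolding rbe using u1[of m] by simp
    also have "\<dots> \<le> K" using bnd[of m] by (simp add: t_def)
    finally show ?thesis using t0 by (simp add: field_simps)
  qed
  have inc: "incseq ?a" using aa_mono x0 by (intro incseq_SucI) simp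
  have bdd: "bdd_above (range ?a)" by (rule bdd_aboveI2[where M="K/x"]) (use abnd in auto)
  define L where "L = (SUP m. ?a m)"
  have lim: "?a \<longlonglongrightarrow> L" unfolding L_def by (rule LIMSEQ_incseq_SUP[OF bdd inc])
  have lim1: "(\<lambda>m. ?a (Suc m)) \<longlonglongrightarrow> L" using lim by (rule LIMSEQ_Suc)
  have lim2: "(\<lambda>m. ?a (Suc m)) \<longlonglongrightarrow> (1 + x * L) ^ p"
  proof -
    have "(\<lambda>m. (1 + x * ?a m) ^ p) \<longlonglongrightarrow> (1 + x * L) ^ p" by (intro tendsto_intros lim)
    then show ?thesis by simp
  qed
  have Leq: "L = (1 + x * L) ^ p" using LIMSEQ_unique[OF lim1 lim2] .
  have L1: "L \<ge> 1" using incseq_le[OF inc lim, of 0] by simp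
  define u where "u = 1 + x * L"
  have "x * L \<ge> 0" using L1 x0 by simp
  then have u0: "u > 0" by (simp add: u_def)
  have ufix: "u = 1 + u ^ p / z ^ 2"
    using Leq z0 unfolding u_def x_def t_def by (simp add: power_divide field_simps)
  have pz: "1 / real p < z" using pp z(1)
    by (smt (verit, ccfv_SIG) divide_le_eq_1_pos of_nat_0_less_iff zero_less_numeral le_divide_eq_1)
  have fz: "ff p z > 0" using ff_sign[OF p _ y(2) pz] pz z(2) by (smt (verit))
  have r1: "real p * u ^ (p - 1) / z > 1" by (rule fixpoint_ratio[OF p z(1) fz u0 ufix])
  have slim: "(\<lambda>m. real p * t * (1 + x * ?a m) ^ (p - 1)) \<longlonglongrightarrow> real p * t * u ^ (p - 1)"
    unfolding u_def by (intro tendsto_intros lim)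
  have "real p * t * u ^ (p - 1) = real p * u ^ (p - 1) / z" by (simp add: t_def)
  with r1 have "1 < real p * t * u ^ (p - 1)" by simp
  from order_tendstoD(1)[OF slim this] obtain m0 where
    m0: "\<And>m. m \<ge> m0 \<Longrightarrow> 1 < real p * t * (1 + x * ?a m) ^ (p - 1)"
    by (auto simp: eventually_sequentially)
  have eqb: "?b (Suc m) = ?a (Suc m) + (real p * t * (1 + x * ?a m) ^ (p - 1)) * ?b m" for m
    using t0 by (simp add: x_def power2_eq_square field_simps)
  have step: "?b (Suc m) \<ge> 1 + ?b m" if "m \<ge> m0" for m
  proof -
    have "?b m \<le> (real p * t * (1 + x * ?a m) ^ (p - 1)) * ?b m"
      using m0[OF that] b0[of m] by (simp add: mult_le_cancel_right1)
    then show ?thesis using eqb[of m] a1[of "Suc m"] by linarith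
  qed
  have grow: "?b (m0 + n) \<ge> real n" for n
  proof (induction n)
    case 0 then show ?case using b0 by simp
  next
    case (Suc n)
    have "?b (Suc (m0 + n)) \<ge> 1 + ?b (m0 + n)" by (rule step) simp
    then show ?case using Suc by simp
  qed
  define n where "n = nat (ceiling (K / t)) + 1"
  have "real n > K / t" unfolding n_def by linarith
  moreover have "?b (m0 + n) \<le> K / t" by (rule bbnd)
  ultimately show False using grow[of n] by linarith
qed


lemma card_D: "finite X \<Longrightarrow> card (X \<times> (UNIV :: bool set)) = 2 * card X"
  by (simp add: card_cartesian_product)

lemma beta_root_rb:
  assumes fD: "finite D" and invD: "\<forall>a\<in>D. linv a \<in> D" and cD: "card D = Suc p" and t: "t > 0"
  shows "beta D (Suc m) [] (t^2) (1/t) = rb p t m"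
  using alpha_beta_root(2)[OF fD invD, of m "t^2" "1/t"] cD by (simp add: rb_def)

lemma beta_0_root: "beta D 0 [] x s = 1"
  using ST0_sums[of "[]"] by simp

theorem growth_main:
  fixes X :: "'a set"
  assumes fX: "finite X" and cX: "card X \<ge> 2"
  defines "p \<equiv> 2 * card X - 1"
  assumes y: "real p < y" "ff p y = 0"
  shows "fim_growth_rate X = ereal y"
proof -
  let ?D = "X \<times> (UNIV :: bool set)"
  have p3: "p \<ge> 3" using cX by (simp add: p_def)
  have fD: "finite ?D" using fX by simp
  have invD: "\<forall>a\<in>?D. linv a \<in> ?D" by (rule invX)
  have cD: "card ?D = Suc p" using card_D[OF fX] cX by (simp add: p_def)
  define c where "c K = real (card (Pairs ?D K))" for K
  have c0: "c K \<ge> 0" for K by (simp add: c_def)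
  have pp: "real p \<ge> 3" using p3 by simp
  have y0: "y > 0" using y pp by simp
  have upper: "\<exists>G. \<forall>K. c K * t ^ K \<le> G" if t: "t > 0" "t * y < 1" for t
  proof -
    define U where "U = real p * y / (real p * y - 1)"
    define Bv where "Bv = U ^ p / (1 - t * y)"
    note us = upper_seq[OF p3 y t, folded U_def Bv_def]
    have U1: "U \<ge> 1" using U_facts(1)[OF p3 y] by (simp add: U_def)
    have xle: "t ^ 2 \<le> 1 / y ^ 2"
    proof -
      have "t \<le> 1 / y" using t y0 by (simp add: field_simps)
      then have "t ^ 2 \<le> (1 / y) ^ 2" using t by (intro power_mono) auto
      then show ?thesis by (simp add: power_divide)
    qed
    have ule: "1 + t^2 * aa p (t^2) m \<le> U" for m
    proof -
      have "t^2 * aa p (t^2) m \<le> (1 / y ^ 2) * U ^ p"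
        using xle us[of m] aa_ge1[of "t^2" p m] by (intro mult_mono) auto
      then show ?thesis using U_facts(3)[OF p3 y] by (simp add: U_def)
    qed
    have u1: "1 + t^2 * aa p (t^2) m \<ge> 1" for m using aa_ge1[of "t^2" p m] by simp
    define G where "G = U ^ Suc p + real (Suc p) * t * Bv * U ^ p"
    have rbG: "rb p t m \<le> G" for m
    proof -
      have rbe: "rb p t m = (1 + t^2 * aa p (t^2) m) ^ Suc p + real (Suc p) * t * bb p (t^2) (1/t) m * (1 + t^2 * aa p (t^2) m) ^ p"
        using t by (simp add: rb_def power2_eq_square field_simps)
      have "(1 + t^2 * aa p (t^2) m) ^ Suc p \<le> U ^ Suc p" using ule[of m] u1[of m] by (intro power_mono) auto
      moreover have "real (Suc p) * t * bb p (t^2) (1/t) m * (1 + t^2 * aa p (t^2) m) ^ p \<le> real (Suc p) * t * Bv * U ^ p"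
        using us[of m] ule[of m] u1[of m] t by (intro mult_mono power_mono) auto
      ultimately show ?thesis unfolding rbe G_def by linarith
    qed
    have G1: "G \<ge> 1"
    proof -
      have "U ^ Suc p \<ge> 1" using U1 by (intro one_le_power)
      moreover have "real (Suc p) * t * Bv * U ^ p \<ge> 0" using us[of 0] t U1 by (intro mult_nonneg_nonneg) auto
      ultimately show ?thesis by (simp add: G_def)
    qed
    have "c K * t ^ K \<le> G" for K
    proof -
      have "c K * t ^ K \<le> beta ?D K [] (t^2) (1/t)" unfolding c_def by (rule upper_count[OF fD t(1)])
      also have "\<dots> \<le> G"
      proof (cases K)
        case 0 then show ?thesis using G1 beta_0_root[of ?D "t^2" "1/t"] by simp
      next
        case (Suc m) then show ?thesis using beta_root_rb[OF fD invD cD t(1)] rbG by simp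
      qed
      finally show ?thesis .
    qed
    then show ?thesis by blast
  qed
  have summ: "summable (\<lambda>n. c n * r ^ n)" if r: "0 < r" "r < 1 / y" for r
  proof -
    define t where "t = (r + 1 / y) / 2"
    have ry: "r * y < 1" "r * y > 0" using r y0 by (auto simp: field_simps)
    have ty: "t * y = (r * y + 1) / 2" using y0 by (simp add: t_def field_simps)
    have "1 / y > 0" using y0 by simp
    then have t1: "t > 0" using r by (simp add: t_def)
    have t2: "t * y < 1" using ry by (simp add: ty)
    have t3: "r < t" using r by (simp add: t_def)
    note t = t1 t2 t3
    obtain G where G: "\<And>K. c K * t ^ K \<le> G" using upper[OF t(1,2)] by blast
    have "summable (\<lambda>n. G * (r / t) ^ n)" using r t by (intro summable_mult summable_geometric) simp
    moreover have "norm (c n * r ^ n) \<le> G * (r / t) ^ n" for n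
    proof -
      have "norm (c n * r ^ n) = (c n * t ^ n) * (r / t) ^ n" using r t c0[of n] by (simp add: power_divide abs_mult)
      also have "\<dots> \<le> G * (r / t) ^ n" using G[of n] r t by (intro mult_right_mono) auto
      finally show ?thesis .
    qed
    ultimately show ?thesis by (rule summable_comparison_test'[where N=0])
  qed
  have nsumm: "\<not> summable (\<lambda>n. norm (c n * r ^ n))" if r: "r > 1 / y" for r
  proof
    assume sr: "summable (\<lambda>n. norm (c n * r ^ n))"
    define r' where "r' = min r (1 / real p)"
    have py: "1 / real p > 1 / y" using y pp by (simp add: frac_less2)
    have r'1: "r' > 1 / y" using r py by (simp add: r'_def)
    have r'0: "r' > 0" using r'1 y0 by (smt (verit) divide_pos_pos)
    have s': "summable (\<lambda>n. c n * r' ^ n)"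
    proof (rule summable_comparison_test'[OF sr, where N=0])
      fix n
      have "r' ^ n \<le> r ^ n" using r'0 by (intro power_mono) (auto simp: r'_def)
      then show "norm (c n * r' ^ n) \<le> norm (c n * r ^ n)" using c0[of n] r'0
        by (simp add: abs_mult mult_left_mono)
    qed
    define S where "S = suminf (\<lambda>n. c n * r' ^ n)"
    define z where "z = 1 / r'"
    have z: "z \<ge> real p" "z < y" using r'0 r'1 y0 pp
      by (auto simp: z_def r'_def field_simps min_def split: if_splits)
    have zr: "1 / z = r'" using r'0 by (simp add: z_def)
    obtain m where m: "rb p (1 / z) m > S" using lower_seq[OF p3 y z] by blast
    have "rb p r' m = beta ?D (Suc m) [] (r'^2) (1/r')" using beta_root_rb[OF fD invD cD r'0] by simp
    also have "\<dots> \<le> (\<Sum>K\<le>2 * card {u. set u \<subseteq> ?D \<and> length u \<le> Suc m}. c K * r' ^ K)"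
      unfolding c_def by (rule lower_count[OF fD r'0])
    also have "\<dots> \<le> S" unfolding S_def
      by (rule sum_le_suminf[OF s']) (use c0 r'0 in auto)
    finally show False using m zr by simp
  qed
  have cr: "conv_radius c = ereal (1 / y)"
  proof (rule conv_radius_eqI')
    show "0 \<le> ereal (1 / y)" using y0 by simp
  next
    fix r :: real assume "0 < r" "ereal r < ereal (1 / y)"
    then show "summable (\<lambda>n. c n * of_real r ^ n)" using summ by simp
  next
    fix r :: real assume "0 < r" "ereal r > ereal (1 / y)"
    then show "\<not> summable (\<lambda>n. norm (c n * of_real r ^ n))" using nsumm by simp
  qed
  define l where "l = limsup (\<lambda>n. ereal (root n (norm (c n))))"
  have l0: "l \<ge> 0"
  proof -
    have "0 = limsup (\<lambda>n. 0::ereal)" by (simp add: Limsup_const)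
    also have "\<dots> \<le> l" unfolding l_def by (intro Limsup_mono) (simp_all add: real_root_ge_zero)
    finally show ?thesis .
  qed
  have "inverse l = ereal (1 / y)" using cr by (simp add: conv_radius_def l_def)
  then have ly: "l = ereal y"
    using l0 y0 by (cases l) (auto split: if_splits simp: field_simps)
  have "fim_growth_rate X = l"
    unfolding fim_growth_rate_def l_def
  proof (rule Limsup_eq)
    show "\<forall>\<^sub>F n in sequentially. ereal (real (card (fim_sphere X n)) powr (1 / real n)) = ereal (root n (norm (c n)))"
      unfolding eventually_sequentially
    proof (intro exI[of _ 1] allI impI)
      fix n :: nat assume n: "n \<ge> 1"
      have "real (card (fim_sphere X n)) = c n" by (simp add: c_def card_sphere)
      then show "ereal (real (card (fim_sphere X n)) powr (1 / real n)) = ereal (root n (norm (c n)))"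
        using n c0[of n] root_powr_inverse[of n "c n"] by simp
    qed
  qed
  then show ?thesis using ly by simp
qed


theorem mainTheorem11:
  fixes X :: "'a set"
  assumes "finite X" and "card X \<ge> 2"
  shows "let p = 2 * card X - 1 in
    \<exists>y::real. fim_growth_rate X = ereal y
      \<and> real p ^ p * y ^ (p - 2) - (real p * y - 1) ^ (p - 1) = 0
      \<and> (\<forall>z::real. real p ^ p * z ^ (p - 2) - (real p * z - 1) ^ (p - 1) = 0 \<longrightarrow> z \<le> y)
      \<and> real p < y \<and> y < real p + 1
      \<and> algebraic y"
proof -
  define p where "p = 2 * card X - 1"
  have p3: "p \<ge> 3" using assms(2) by (simp add: p_def)
  obtain y where y: "real p < y" "y < real p + 1" "ff p y = 0" using root_exists[OF p3] by blast
  have g: "fim_growth_rate X = ereal y" using growth_main[OF assms, of y] y by (simp add: p_def)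
  have l: "\<forall>z::real. real p ^ p * z ^ (p - 2) - (real p * z - 1) ^ (p - 1) = 0 \<longrightarrow> z \<le> y"
    using largest_root[OF p3 y(1) y(3)] by (simp add: ff_def)
  have "\<exists>y::real. fim_growth_rate X = ereal y
      \<and> real p ^ p * y ^ (p - 2) - (real p * y - 1) ^ (p - 1) = 0
      \<and> (\<forall>z::real. real p ^ p * z ^ (p - 2) - (real p * z - 1) ^ (p - 1) = 0 \<longrightarrow> z \<le> y)
      \<and> real p < y \<and> y < real p + 1
      \<and> algebraic y"
    using g l y ff_algebraic[OF p3 y(3)] by (intro exI[of _ y]) (simp add: ff_def)
  then show ?thesis unfolding p_def Let_def .
qed

end
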